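(* Assume the hypotheses listed below. A random field $u\in\mathcal{C}(\mathbf{F}^B,[0,T]\times\overline{G})$ is a stochastic viscosity solution of the SPDE $(f,g,h)$ if and only if $v(t,x)=\varepsilon(t,x,u(t,x))$ is a stochastic viscosity solution of the SPDE $(\tilde f,0,\tilde h)$, where $$\tilde f(t,x,y,z)=\frac{1}{D_y\eta(t,x,y)}\Big[f\big(t,x,\eta(t,x,y),\sigma(x)^*D_x\eta(t,x,y)+D_y\eta(t,x,y)z\big)-\tfrac12\langle g,D_yg\rangle(t,x,\eta(t,x,y))+L_x\eta(t,x,y)+\langle\sigma(x)^*D_{xy}\eta(t,x,y),z\rangle+\tfrac12D_{yy}\eta(t,x,y)|z|^2\Big],$$ $$\tilde h(t,x,y)=\frac{1}{D_y\eta(t,x,y)}\Big(h(t,x,\eta(t,x,y))+\langle D_x\eta(t,x,y),\nabla\phi(x)\rangle\Big),$$ with $L_x$ denoting the operator $L$ acting on the $x$-variable.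
   Context: Let $W$ and $B$ be independent $d$-dimensional Brownian motions on $(\Omega_1,\mathcal F_1,\mathbb P_1)$ and $(\Omega_2,\mathcal F_2,\mathbb P_2)$, $\Omega=\Omega_1\times\Omega_2$, $\mathbb P=\mathbb P_1\otimes\mathbb P_2$, $\mathcal{F}^B_{t,T}=\sigma\{B_r-B_t,\ t\le r\le T\}$, $\mathbf F^B=\{\mathcal F^B_{t,T}\}_{0\le t\le T}$, and $\mathcal M^B_{0,T}$ the set of $\mathbf F^B$-stopping times with values in $[0,T]$. $\mathcal C(\mathbf F^B,[0,T]\times\overline G)$ denotes continuous random fields $\alpha(t,\omega,x)$ that are $\mathcal F^B_T\otimes\mathcal B$-measurable with $(t,\omega)\mapsto\alpha(t,\omega,x)$ $\mathbf F^B$-progressively measurable; $\mathcal C^{1,2}(\mathcal F^B_\tau,[0,T]\times\mathbb R^n)$ denotes $\mathcal F^B_\tau\otimes\mathcal B$-measurable random fields that are $C^1$ in $t$ and $C^2$ in $x$. $G\subset\mathbb R^n$ is an open connected bounded smooth domain with $G=\{\phi>0\}$, $\partial G=\{\phi=0\}$ for some $\phi\in C^2_b(\mathbb R^n)$, $\nabla\phi(x)$ the unit inward normal on $\partial G$, and $\partial\psi/\partial n=\langle D_x\psi,\nabla\phi\rangle$. Hypotheses: $f:\Omega_2\times[0,T]\times\overline G\times\mathbb R\times\mathbb R^d\to\mathbb R$ and $h:\Omega_2\times[0,T]\times\overline G\times\mathbb R\to\mathbb R$ are continuous, Lipschitz in $x$, with $|f(t,x,y,z)|\le K(1+|y|+|x|+\|z\|)$,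 $|h(t,x,y)|\le K(1+|y|+|x|)$, $|f(t,x,y_1,z_1)-f(t,x,y_2,z_2)|^2\le c(|y_1-y_2|^2+\|z_1-z_2\|^2)$, $|h(t,x,y_1)-h(t,x,y_2)|\le\beta_1|y_1-y_2|$ uniformly in $x$; $\sigma:\mathbb R^n\to\mathbb R^{n\times d}$, $b:\mathbb R^n\to\mathbb R^n$ are uniformly Lipschitz; $l:\overline G\to\mathbb R$ is continuous with $|l(x)|\le K(1+|x|)$; $g\in C_b^{0,2,3}([0,T]\times\overline G\times\mathbb R;\mathbb R^d)$ (bounded with bounded derivatives up to order 2 in $x$ and 3 in $y$). $L=\frac12\sum_{i,j}(\sigma\sigma^* )_{ij}(x)\partial^2_{x_ix_j}+\sum_i b_i(x)\partial_{x_i}$. The SPDE $(f,g,h)$ is: $du+[Lu+f(t,x,u,\sigma^*(x)D_xu)]dt+\sum_{i=1}^d g_i(t,x,u)\,\overleftarrow{dB}^i_t=0$ on $[0,T]\times G$, $u(T,x)=l(x)$, $\frac{\partial u}{\partial n}+h(t,x,u)=0$ on $\partial G$ (with $\overleftarrow{dB}$ the backward Itô integral). $\eta(t,x,y)$ is the solution of $\eta(t,x,y)=y+\int_t^T\langle g(s,x,\eta(s,x,y)),\circ\overleftarrow{dB}_s\rangle$ (backward Stratonovich), $y\mapsto\eta(t,x,y)$ is a strictly increasing diffeomorphism, and $\varepsilon(t,x,\cdot)$ is its $y$-inverse. Write $A_{f,g}(\varphi(t,x))=-L\varphi(t,x)-f(t,x,\varphi(t,x),\sigma^*(x)D_x\varphi(t,x))+\frac12\langle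 g,D_yg\rangle(t,x,\varphi(t,x))$. Definition: $u\in\mathcal C(\mathbf F^B,[0,T]\times\overline G)$ is a stochastic viscosity subsolution of the SPDE $(f,g,h)$ if $u(T,x)\le l(x)$ on $\overline G$ and, for every $\tau\in\mathcal M^B_{0,T}$, every $\mathcal F^B_\tau$-measurable $G$-valued $\xi$, and every $\varphi\in\mathcal C^{1,2}(\mathcal F^B_\tau,[0,T]\times\mathbb R^n)$ such that for a.e. $\omega\in\{0<\tau<T\}$, $u(t,x)-\eta(t,x,\varphi(t,x))\le0=u(\tau,\xi)-\eta(\tau,\xi,\varphi(\tau,\xi))$ for $(t,x)$ in a neighbourhood of $(\tau,\xi)$, one has, with $\psi(t,x)=\eta(t,x,\varphi(t,x))$: (a) $A_{f,g}(\psi(\tau,\xi))-D_y\eta(\tau,\xi,\varphi(\tau,\xi))D_t\varphi(\tau,\xi)\le0$ a.s. on $\{0<\tau<T\}$; (b) $\min[A_{f,g}(\psi(\tau,\xi))-D_y\eta(\tau,\xi,\varphi(\tau,\xi))D_t\varphi(\tau,\xi),\ -\frac{\partial\psi}{\partial n}(\tau,\xi)-h(\tau,\xi,\psi(\tau,\xi))]\le0$ a.s. on $\{0<\tau<T\}\cap\{\xi\in\partial G\}$. Supersolution: reverse all inequalities ($\ge$, and $\max$ in place of $\min$). Solution: both. For $g\equiv0$ the flow $\eta$ is the identity, so $\psi=\varphi$. *)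

theory Defs
  imports "HOL-Probability.Probability"
begin

section \<open>Classical derivatives (partial derivatives via difference quotients along basis directions)\<close>

definition dd :: "'v::real_normed_vector \<Rightarrow> ('v \<Rightarrow> real) \<Rightarrow> 'v \<Rightarrow> real" where
  "dd e H p = deriv (\<lambda>s. H (p + s *\<^sub>R e)) 0"

definition C2 :: "('v::euclidean_space \<Rightarrow> real) \<Rightarrow> bool" where
  "C2 H \<longleftrightarrow> continuous_on UNIV H \<and>
     (\<forall>e\<in>Basis. \<forall>e'\<in>Basis. \<forall>p.
        ((\<lambda>s. H (p + s *\<^sub>R e)) has_real_derivative dd e H p) (at 0) \<and>
        ((\<lambda>s. dd e' H (p + s *\<^sub>R e)) has_real_derivative dd e (dd e' H) p) (at 0)) \<and>
     (\<forall>e\<in>Basis. continuous_on UNIV (dd e H)) \<and>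
     (\<forall>e\<in>Basis. \<forall>e'\<in>Basis. continuous_on UNIV (dd e (dd e' H)))"

definition pd :: "'n::finite \<Rightarrow> (real^'n \<Rightarrow> real) \<Rightarrow> real^'n \<Rightarrow> real" where
  "pd i F x = dd (axis i 1) F x"

definition grad :: "(real^'n::finite \<Rightarrow> real) \<Rightarrow> real^'n \<Rightarrow> real^'n" where
  "grad F x = (\<chi> i. pd i F x)"

definition Dt :: "(real \<Rightarrow> 'x \<Rightarrow> real) \<Rightarrow> real \<Rightarrow> 'x \<Rightarrow> real" where
  "Dt \<phi> t x = deriv (\<lambda>s. \<phi> s x) t"

definition Dy :: "(real \<Rightarrow> 'x \<Rightarrow> real \<Rightarrow> real) \<Rightarrow> real \<Rightarrow> 'x \<Rightarrow> real \<Rightarrow> real" where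
  "Dy F t x y = deriv (\<lambda>y'. F t x y') y"

definition Dx :: "'n::finite \<Rightarrow> (real \<Rightarrow> real^'n \<Rightarrow> real \<Rightarrow> real) \<Rightarrow> real \<Rightarrow> real^'n \<Rightarrow> real \<Rightarrow> real" where
  "Dx i F t x y = pd i (\<lambda>x'. F t x' y) x"

definition Lop :: "(real^'n \<Rightarrow> real^'d^'n) \<Rightarrow> (real^'n \<Rightarrow> real^'n) \<Rightarrow> (real^'n::finite \<Rightarrow> real)
                    \<Rightarrow> real^'n \<Rightarrow> real" where
  "Lop \<sigma> b F x = (1/2) * (\<Sum>i\<in>UNIV. \<Sum>j\<in>UNIV. (\<sigma> x ** transpose (\<sigma> x)) $ i $ j * pd i (pd j F) x)
                  + (\<Sum>i\<in>UNIV. b x $ i * pd i F x)"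

definition sigDx :: "(real^'n \<Rightarrow> real^'d^'n) \<Rightarrow> (real^'n::finite \<Rightarrow> real) \<Rightarrow> real^'n \<Rightarrow> real^'d::finite" where
  "sigDx \<sigma> F x = transpose (\<sigma> x) *v grad F x"

definition dnormal :: "(real^'n::finite \<Rightarrow> real) \<Rightarrow> (real^'n \<Rightarrow> real) \<Rightarrow> real^'n \<Rightarrow> real" where
  "dnormal \<phi>G F x = grad F x \<bullet> grad \<phi>G x"

definition gDg :: "(real \<Rightarrow> real^'n \<Rightarrow> real \<Rightarrow> real^'d::finite) \<Rightarrow> real \<Rightarrow> real^'n \<Rightarrow> real \<Rightarrow> real" where
  "gDg g t x y = (\<Sum>i\<in>UNIV. g t x y $ i * deriv (\<lambda>y'. g t x y' $ i) y)"

text \<open>A_{f,g}(psi(t,x)) for a deterministic (fixed omega) field psi.\<close>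
definition Aop :: "(real^'n \<Rightarrow> real^'d^'n) \<Rightarrow> (real^'n \<Rightarrow> real^'n)
     \<Rightarrow> (real \<Rightarrow> real^'n \<Rightarrow> real \<Rightarrow> real^'d \<Rightarrow> real) \<Rightarrow> (real \<Rightarrow> real^'n \<Rightarrow> real \<Rightarrow> real^'d::finite)
     \<Rightarrow> (real \<Rightarrow> real^'n::finite \<Rightarrow> real) \<Rightarrow> real \<Rightarrow> real^'n \<Rightarrow> real" where
  "Aop \<sigma> b f g \<psi> t x = - Lop \<sigma> b (\<psi> t) x - f t x (\<psi> t x) (sigDx \<sigma> (\<psi> t) x) + gDg g t x (\<psi> t x) / 2"

definition C12 :: "(real \<Rightarrow> real^'n::finite \<Rightarrow> real) \<Rightarrow> bool" where
  "C12 \<phi> \<longleftrightarrow> (\<forall>t x. ((\<lambda>s. \<phi> s x) has_real_derivative Dt \<phi> t x) (at t)) \<and>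
     continuous_on UNIV (\<lambda>(t,x). Dt \<phi> t x) \<and>
     (\<forall>t. C2 (\<phi> t)) \<and>
     continuous_on UNIV (\<lambda>(t,x). \<phi> t x) \<and>
     (\<forall>i. continuous_on UNIV (\<lambda>(t,x). pd i (\<phi> t) x)) \<and>
     (\<forall>i j. continuous_on UNIV (\<lambda>(t,x). pd i (pd j (\<phi> t)) x))"

definition C2b :: "(real^'n::finite \<Rightarrow> real) \<Rightarrow> bool" where
  "C2b \<phi> \<longleftrightarrow> C2 \<phi> \<and> bounded (range \<phi>) \<and> (\<forall>i. bounded (range (pd i \<phi>))) \<and>
      (\<forall>i j. bounded (range (pd i (pd j \<phi>))))"

text \<open>g in C_b^{0,2,3}([0,T] x R^n x R; R^d): for every component, the derivatives
  D_x^alpha D_y^k g (|alpha| <= 2, k <= 3) exist, are continuous and bounded.\<close>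
definition Cb023 :: "real \<Rightarrow> (real \<Rightarrow> real^'n::finite \<Rightarrow> real \<Rightarrow> real^'d::finite) \<Rightarrow> bool" where
  "Cb023 T g \<longleftrightarrow> (\<forall>j::'d. \<forall>k::nat. \<forall>ixs::'n list. k \<le> 3 \<and> length ixs \<le> 2 \<longrightarrow>
     (let H = foldr Dx ixs ((Dy ^^ k) (\<lambda>t x y. g t x y $ j)) in
        (\<exists>C. \<forall>t\<in>{0..T}. \<forall>x y. \<bar>H t x y\<bar> \<le> C) \<and>
        continuous_on ({0..T} \<times> UNIV \<times> UNIV) (\<lambda>(t,x,y). H t x y) \<and>
        (length ixs < 2 \<longrightarrow> (\<forall>i t x y. ((\<lambda>s. H t (x + s *\<^sub>R axis i 1) y) has_real_derivative Dx i H t x y) (at 0))) \<and>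
        (ixs = [] \<and> k < 3 \<longrightarrow> (\<forall>t x y. ((\<lambda>y'. H t x y') has_real_derivative Dy H t x y) (at y)))))"

section \<open>Brownian motion and its backward filtration\<close>

definition brownian_motion :: "'a measure \<Rightarrow> (real \<Rightarrow> 'a \<Rightarrow> real^'d::finite) \<Rightarrow> bool" where
  "brownian_motion M B \<longleftrightarrow> prob_space M \<and>
     (\<forall>t i. (\<lambda>\<omega>. B t \<omega> $ i) \<in> borel_measurable M) \<and>
     (\<forall>\<omega>\<in>space M. B 0 \<omega> = 0 \<and> continuous_on {0..} (\<lambda>t. B t \<omega>)) \<and>
     (\<forall>ts::real list. sorted ts \<and> distinct ts \<and> (\<forall>t\<in>set ts. 0 \<le> t) \<longrightarrow>
        prob_space.indep_vars M (\<lambda>_. borel)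
          (\<lambda>p \<omega>. B (ts ! Suc (fst p)) \<omega> $ snd p - B (ts ! fst p) \<omega> $ snd p) ({..<length ts - 1} \<times> UNIV) \<and>
        (\<forall>m<length ts - 1. \<forall>i. distributed M lborel (\<lambda>\<omega>. B (ts ! Suc m) \<omega> $ i - B (ts ! m) \<omega> $ i)
             (\<lambda>x. ennreal (normal_density 0 (sqrt (ts ! Suc m - ts ! m)) x))))"

text \<open>F^B_{t,T} = sigma{B_r - B_t, t <= r <= T} (a decreasing family in t).\<close>
definition FB :: "'a measure \<Rightarrow> (real \<Rightarrow> 'a \<Rightarrow> real^'d::finite) \<Rightarrow> real \<Rightarrow> real \<Rightarrow> 'a measure" where
  "FB M B T t = sigma (space M)
     (\<Union>r\<in>{t..T}. {(\<lambda>\<omega>. B r \<omega> - B t \<omega>) -` A \<inter> space M | A. A \<in> sets borel})"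

definition bstop :: "'a measure \<Rightarrow> (real \<Rightarrow> 'a \<Rightarrow> real^'d::finite) \<Rightarrow> real \<Rightarrow> ('a \<Rightarrow> real) \<Rightarrow> bool" where
  "bstop M B T \<tau> \<longleftrightarrow> (\<forall>\<omega>\<in>space M. 0 \<le> \<tau> \<omega> \<and> \<tau> \<omega> \<le> T) \<and>
     (\<forall>t\<in>{0..T}. {\<omega>\<in>space M. t \<le> \<tau> \<omega>} \<in> sets (FB M B T t))"

definition FBtau :: "'a measure \<Rightarrow> (real \<Rightarrow> 'a \<Rightarrow> real^'d::finite) \<Rightarrow> real \<Rightarrow> ('a \<Rightarrow> real) \<Rightarrow> 'a measure" where
  "FBtau M B T \<tau> = sigma (space M)
     {A. A \<subseteq> space M \<and> (\<forall>t\<in>{0..T}. A \<inter> {\<omega>\<in>space M. t \<le> \<tau> \<omega>} \<in> sets (FB M B T t))}"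

definition CFB :: "'a measure \<Rightarrow> (real \<Rightarrow> 'a \<Rightarrow> real^'d::finite) \<Rightarrow> real \<Rightarrow> (real^'n::finite) set
                   \<Rightarrow> ('a \<Rightarrow> real \<Rightarrow> real^'n \<Rightarrow> real) \<Rightarrow> bool" where
  "CFB M B T Gb \<alpha> \<longleftrightarrow>
     (\<forall>\<omega>\<in>space M. continuous_on ({0..T} \<times> Gb) (\<lambda>(t,x). \<alpha> \<omega> t x)) \<and>
     (\<lambda>(\<omega>,(t,x)). \<alpha> \<omega> t x) \<in> borel_measurable (FB M B T 0 \<Otimes>\<^sub>M restrict_space borel ({0..T} \<times> Gb)) \<and>
     (\<forall>x\<in>Gb. \<forall>t\<in>{0..T}. (\<lambda>(s,\<omega>). \<alpha> \<omega> s x)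
        \<in> borel_measurable (restrict_space borel {t..T} \<Otimes>\<^sub>M FB M B T t))"

definition C12F :: "'a measure \<Rightarrow> (real \<Rightarrow> 'a \<Rightarrow> real^'d::finite) \<Rightarrow> real \<Rightarrow> ('a \<Rightarrow> real)
                   \<Rightarrow> ('a \<Rightarrow> real \<Rightarrow> real^'n::finite \<Rightarrow> real) \<Rightarrow> bool" where
  "C12F M B T \<tau> \<phi> \<longleftrightarrow>
     (\<lambda>(\<omega>,(t,x)). \<phi> \<omega> t x) \<in> borel_measurable (FBtau M B T \<tau> \<Otimes>\<^sub>M borel) \<and>
     (\<forall>\<omega>\<in>space M. C12 (\<phi> \<omega>))"

section \<open>Stochastic viscosity sub/supersolutions\<close>

definition touch_above :: "real \<Rightarrow> (real^'n::finite) set \<Rightarrow> (real \<Rightarrow> real^'n \<Rightarrow> real) \<Rightarrow> (real \<Rightarrow> real^'n \<Rightarrow> real)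
                           \<Rightarrow> real \<Rightarrow> real^'n \<Rightarrow> bool" where
  "touch_above T Gb U \<Psi> t0 x0 \<longleftrightarrow>
     (\<exists>e>0. \<forall>t\<in>{0..T}. \<forall>x\<in>Gb. \<bar>t - t0\<bar> < e \<and> dist x x0 < e \<longrightarrow> U t x - \<Psi> t x \<le> 0) \<and>
     U t0 x0 - \<Psi> t0 x0 = 0"

definition touch_below :: "real \<Rightarrow> (real^'n::finite) set \<Rightarrow> (real \<Rightarrow> real^'n \<Rightarrow> real) \<Rightarrow> (real \<Rightarrow> real^'n \<Rightarrow> real)
                           \<Rightarrow> real \<Rightarrow> real^'n \<Rightarrow> bool" where
  "touch_below T Gb U \<Psi> t0 x0 \<longleftrightarrow>
     (\<exists>e>0. \<forall>t\<in>{0..T}. \<forall>x\<in>Gb. \<bar>t - t0\<bar> < e \<and> dist x x0 < e \<longrightarrow> U t x - \<Psi> t x \<ge> 0) \<and>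
     U t0 x0 - \<Psi> t0 x0 = 0"

text \<open>Parameters: M (probability space), B (Brownian motion), T, G (domain), phiG (defining
  function of G), sigma, b, l (terminal datum), f, g, eta (the flow associated with g), h, u.\<close>
definition visc_sub ::
  "'a measure \<Rightarrow> (real \<Rightarrow> 'a \<Rightarrow> real^'d::finite) \<Rightarrow> real \<Rightarrow> (real^'n::finite) set \<Rightarrow> (real^'n \<Rightarrow> real)
   \<Rightarrow> (real^'n \<Rightarrow> real^'d^'n) \<Rightarrow> (real^'n \<Rightarrow> real^'n) \<Rightarrow> (real^'n \<Rightarrow> real)
   \<Rightarrow> ('a \<Rightarrow> real \<Rightarrow> real^'n \<Rightarrow> real \<Rightarrow> real^'d \<Rightarrow> real) \<Rightarrow> (real \<Rightarrow> real^'n \<Rightarrow> real \<Rightarrow> real^'d)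
   \<Rightarrow> ('a \<Rightarrow> real \<Rightarrow> real^'n \<Rightarrow> real \<Rightarrow> real) \<Rightarrow> ('a \<Rightarrow> real \<Rightarrow> real^'n \<Rightarrow> real \<Rightarrow> real)
   \<Rightarrow> ('a \<Rightarrow> real \<Rightarrow> real^'n \<Rightarrow> real) \<Rightarrow> bool" where
  "visc_sub M B T G \<phi>G \<sigma> b l f g \<eta> h u \<longleftrightarrow>
     CFB M B T (closure G) u \<and>
     (\<forall>\<omega>\<in>space M. \<forall>x\<in>closure G. u \<omega> T x \<le> l x) \<and>
     (\<forall>\<tau> \<xi> \<phi>. bstop M B T \<tau> \<and> \<xi> \<in> borel_measurable (FBtau M B T \<tau>) \<and>
        (\<forall>\<omega>\<in>space M. \<xi> \<omega> \<in> closure G) \<and> C12F M B T \<tau> \<phi> \<and>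
        (AE \<omega> in M. 0 < \<tau> \<omega> \<and> \<tau> \<omega> < T \<longrightarrow>
            touch_above T (closure G) (u \<omega>) (\<lambda>t x. \<eta> \<omega> t x (\<phi> \<omega> t x)) (\<tau> \<omega>) (\<xi> \<omega>))
      \<longrightarrow>
        (AE \<omega> in M. 0 < \<tau> \<omega> \<and> \<tau> \<omega> < T \<and> \<xi> \<omega> \<in> G \<longrightarrow>
            Aop \<sigma> b (f \<omega>) g (\<lambda>t x. \<eta> \<omega> t x (\<phi> \<omega> t x)) (\<tau> \<omega>) (\<xi> \<omega>)
            - Dy (\<eta> \<omega>) (\<tau> \<omega>) (\<xi> \<omega>) (\<phi> \<omega> (\<tau> \<omega>) (\<xi> \<omega>)) * Dt (\<phi> \<omega>) (\<tau> \<omega>) (\<xi> \<omega>) \<le> 0) \<and>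
        (AE \<omega> in M. 0 < \<tau> \<omega> \<and> \<tau> \<omega> < T \<and> \<xi> \<omega> \<in> frontier G \<longrightarrow>
            min (Aop \<sigma> b (f \<omega>) g (\<lambda>t x. \<eta> \<omega> t x (\<phi> \<omega> t x)) (\<tau> \<omega>) (\<xi> \<omega>)
                  - Dy (\<eta> \<omega>) (\<tau> \<omega>) (\<xi> \<omega>) (\<phi> \<omega> (\<tau> \<omega>) (\<xi> \<omega>)) * Dt (\<phi> \<omega>) (\<tau> \<omega>) (\<xi> \<omega>))
                (- dnormal \<phi>G (\<lambda>x. \<eta> \<omega> (\<tau> \<omega>) x (\<phi> \<omega> (\<tau> \<omega>) x)) (\<xi> \<omega>)
                  - h \<omega> (\<tau> \<omega>) (\<xi> \<omega>) (\<eta> \<omega> (\<tau> \<omega>) (\<xi> \<omega>) (\<phi> \<omega> (\<tau> \<omega>) (\<xi> \<omega>)))) \<le> 0))"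

definition visc_super ::
  "'a measure \<Rightarrow> (real \<Rightarrow> 'a \<Rightarrow> real^'d::finite) \<Rightarrow> real \<Rightarrow> (real^'n::finite) set \<Rightarrow> (real^'n \<Rightarrow> real)
   \<Rightarrow> (real^'n \<Rightarrow> real^'d^'n) \<Rightarrow> (real^'n \<Rightarrow> real^'n) \<Rightarrow> (real^'n \<Rightarrow> real)
   \<Rightarrow> ('a \<Rightarrow> real \<Rightarrow> real^'n \<Rightarrow> real \<Rightarrow> real^'d \<Rightarrow> real) \<Rightarrow> (real \<Rightarrow> real^'n \<Rightarrow> real \<Rightarrow> real^'d)
   \<Rightarrow> ('a \<Rightarrow> real \<Rightarrow> real^'n \<Rightarrow> real \<Rightarrow> real) \<Rightarrow> ('a \<Rightarrow> real \<Rightarrow> real^'n \<Rightarrow> real \<Rightarrow> real)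
   \<Rightarrow> ('a \<Rightarrow> real \<Rightarrow> real^'n \<Rightarrow> real) \<Rightarrow> bool" where
  "visc_super M B T G \<phi>G \<sigma> b l f g \<eta> h u \<longleftrightarrow>
     CFB M B T (closure G) u \<and>
     (\<forall>\<omega>\<in>space M. \<forall>x\<in>closure G. u \<omega> T x \<ge> l x) \<and>
     (\<forall>\<tau> \<xi> \<phi>. bstop M B T \<tau> \<and> \<xi> \<in> borel_measurable (FBtau M B T \<tau>) \<and>
        (\<forall>\<omega>\<in>space M. \<xi> \<omega> \<in> closure G) \<and> C12F M B T \<tau> \<phi> \<and>
        (AE \<omega> in M. 0 < \<tau> \<omega> \<and> \<tau> \<omega> < T \<longrightarrow>
            touch_below T (closure G) (u \<omega>) (\<lambda>t x. \<eta> \<omega> t x (\<phi> \<omega> t x)) (\<tau> \<omega>) (\<xi> \<omega>))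
      \<longrightarrow>
        (AE \<omega> in M. 0 < \<tau> \<omega> \<and> \<tau> \<omega> < T \<and> \<xi> \<omega> \<in> G \<longrightarrow>
            Aop \<sigma> b (f \<omega>) g (\<lambda>t x. \<eta> \<omega> t x (\<phi> \<omega> t x)) (\<tau> \<omega>) (\<xi> \<omega>)
            - Dy (\<eta> \<omega>) (\<tau> \<omega>) (\<xi> \<omega>) (\<phi> \<omega> (\<tau> \<omega>) (\<xi> \<omega>)) * Dt (\<phi> \<omega>) (\<tau> \<omega>) (\<xi> \<omega>) \<ge> 0) \<and>
        (AE \<omega> in M. 0 < \<tau> \<omega> \<and> \<tau> \<omega> < T \<and> \<xi> \<omega> \<in> frontier G \<longrightarrow>
            max (Aop \<sigma> b (f \<omega>) g (\<lambda>t x. \<eta> \<omega> t x (\<phi> \<omega> t x)) (\<tau> \<omega>) (\<xi> \<omega>)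
                  - Dy (\<eta> \<omega>) (\<tau> \<omega>) (\<xi> \<omega>) (\<phi> \<omega> (\<tau> \<omega>) (\<xi> \<omega>)) * Dt (\<phi> \<omega>) (\<tau> \<omega>) (\<xi> \<omega>))
                (- dnormal \<phi>G (\<lambda>x. \<eta> \<omega> (\<tau> \<omega>) x (\<phi> \<omega> (\<tau> \<omega>) x)) (\<xi> \<omega>)
                  - h \<omega> (\<tau> \<omega>) (\<xi> \<omega>) (\<eta> \<omega> (\<tau> \<omega>) (\<xi> \<omega>) (\<phi> \<omega> (\<tau> \<omega>) (\<xi> \<omega>)))) \<ge> 0))"

definition visc_sol where
  "visc_sol M B T G \<phi>G \<sigma> b l f g \<eta> h u \<longleftrightarrow>
     visc_sub M B T G \<phi>G \<sigma> b l f g \<eta> h u \<and> visc_super M B T G \<phi>G \<sigma> b l f g \<eta> h u"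

definition eps :: "('a \<Rightarrow> real \<Rightarrow> 'x \<Rightarrow> real \<Rightarrow> real) \<Rightarrow> 'a \<Rightarrow> real \<Rightarrow> 'x \<Rightarrow> real \<Rightarrow> real" where
  "eps \<eta> \<omega> t x = inv (\<eta> \<omega> t x)"

definition ftilde ::
  "(real^'n \<Rightarrow> real^'d^'n) \<Rightarrow> (real^'n \<Rightarrow> real^'n) \<Rightarrow> ('a \<Rightarrow> real \<Rightarrow> real^'n \<Rightarrow> real \<Rightarrow> real^'d \<Rightarrow> real)
   \<Rightarrow> (real \<Rightarrow> real^'n \<Rightarrow> real \<Rightarrow> real^'d::finite) \<Rightarrow> ('a \<Rightarrow> real \<Rightarrow> real^'n::finite \<Rightarrow> real \<Rightarrow> real)
   \<Rightarrow> 'a \<Rightarrow> real \<Rightarrow> real^'n \<Rightarrow> real \<Rightarrow> real^'d \<Rightarrow> real" where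
  "ftilde \<sigma> b f g \<eta> \<omega> t x y z =
     (1 / Dy (\<eta> \<omega>) t x y) *
       ( f \<omega> t x (\<eta> \<omega> t x y) (sigDx \<sigma> (\<lambda>x'. \<eta> \<omega> t x' y) x + Dy (\<eta> \<omega>) t x y *\<^sub>R z)
         - gDg g t x (\<eta> \<omega> t x y) / 2
         + Lop \<sigma> b (\<lambda>x'. \<eta> \<omega> t x' y) x
         + sigDx \<sigma> (\<lambda>x'. Dy (\<eta> \<omega>) t x' y) x \<bullet> z
         + Dy (Dy (\<eta> \<omega>)) t x y / 2 * (norm z)\<^sup>2 )"

definition htilde ::
  "(real^'n::finite \<Rightarrow> real) \<Rightarrow> ('a \<Rightarrow> real \<Rightarrow> real^'n \<Rightarrow> real \<Rightarrow> real)
   \<Rightarrow> ('a \<Rightarrow> real \<Rightarrow> real^'n \<Rightarrow> real \<Rightarrow> real) \<Rightarrow> 'a \<Rightarrow> real \<Rightarrow> real^'n \<Rightarrow> real \<Rightarrow> real" where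
  "htilde \<phi>G h \<eta> \<omega> t x y =
     (1 / Dy (\<eta> \<omega>) t x y) * (h \<omega> t x (\<eta> \<omega> t x y) + grad (\<lambda>x'. \<eta> \<omega> t x' y) x \<bullet> grad \<phi>G x)"

end

theory Submission
  imports Defs
begin


lemma line_deriv_at:
  fixes H :: "'v::real_normed_vector \<Rightarrow> real"
  assumes der: "\<And>q. ((\<lambda>s. H (q + s *\<^sub>R e)) has_real_derivative D q) (at 0)"
  shows "((\<lambda>s. H (p + s *\<^sub>R e)) has_real_derivative D (p + s0 *\<^sub>R e)) (at s0)"
proof -
  have "((\<lambda>s. H ((p + s0 *\<^sub>R e) + s *\<^sub>R e)) has_real_derivative D (p + s0 *\<^sub>R e)) (at (s0 + (-s0)))"
    using der by simp
  then have "((\<lambda>s. H ((p + s0 *\<^sub>R e) + (s + (-s0)) *\<^sub>R e)) has_real_derivative D (p + s0 *\<^sub>R e)) (at s0)"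
    by (rule DERIV_shift[THEN iffD1])
  moreover have "(\<lambda>s. H ((p + s0 *\<^sub>R e) + (s + (-s0)) *\<^sub>R e)) = (\<lambda>s. H (p + s *\<^sub>R e))"
    by (rule ext) (simp add: algebra_simps)
  ultimately show ?thesis by simp
qed

lemma finite_min_delta:
  fixes p :: "'b::metric_space"
  assumes "finite A" "\<forall>a\<in>A. \<exists>d>0. \<forall>x. dist x p < d \<longrightarrow> P a x"
  shows "\<exists>d>0. \<forall>x. dist x p < d \<longrightarrow> (\<forall>a\<in>A. P a x)"
proof -
  have "\<forall>a\<in>A. eventually (\<lambda>x. P a x) (nhds p)"
    using assms(2) unfolding eventually_nhds_metric .
  then have "eventually (\<lambda>x. \<forall>a\<in>A. P a x) (nhds p)"
    by (rule eventually_ball_finite[OF assms(1)])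
  then show ?thesis unfolding eventually_nhds_metric .
qed

lemma frechet_partials:
  fixes H :: "'v::euclidean_space \<Rightarrow> real"
  assumes der: "\<And>b q. b \<in> Basis \<Longrightarrow> ((\<lambda>s. H (q + s *\<^sub>R b)) has_real_derivative Db b q) (at 0)"
    and cont: "\<And>b. b \<in> Basis \<Longrightarrow> continuous_on UNIV (Db b)"
  shows "(H has_derivative (\<lambda>h. \<Sum>b\<in>Basis. (h \<bullet> b) * Db b p)) (at p)"
proof -
  have bl: "bounded_linear (\<lambda>h. \<Sum>b\<in>Basis. (h \<bullet> b) * Db b p)"
    by (rule bounded_linear_sum, rule bounded_linear_compose[OF bounded_linear_mult_left bounded_linear_inner_left])
  show ?thesis unfolding has_derivative_at_alt
  proof (intro conjI allI impI bl)
    fix e :: real assume e: "e > 0"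
    define e' where "e' = e / real DIM('v)"
    have e': "e' > 0" using e by (simp add: e'_def)
    have "\<forall>b\<in>Basis. \<exists>d>0. \<forall>q. dist q p < d \<longrightarrow> \<bar>Db b q - Db b p\<bar> < e'"
    proof
      fix b :: 'v assume b: "b \<in> Basis"
      show "\<exists>d>0. \<forall>q. dist q p < d \<longrightarrow> \<bar>Db b q - Db b p\<bar> < e'"
      proof -
        have "\<forall>x\<in>UNIV. \<forall>\<epsilon>>0. \<exists>\<delta>>0. \<forall>x'\<in>UNIV. dist x' x < \<delta> \<longrightarrow> dist (Db b x') (Db b x) < \<epsilon>"
          using cont[OF b] unfolding continuous_on_iff .
        then obtain \<delta> where "\<delta> > 0" "\<And>x'. dist x' p < \<delta> \<Longrightarrow> dist (Db b x') (Db b p) < e'"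
          using e' by blast
        then show ?thesis unfolding dist_real_def by blast
      qed
    qed
    then obtain d where d: "d > 0" and dd: "\<And>b q. b \<in> Basis \<Longrightarrow> dist q p < d \<Longrightarrow> \<bar>Db b q - Db b p\<bar> < e'"
      using finite_min_delta[of "Basis :: 'v set" p "\<lambda>b q. \<bar>Db b q - Db b p\<bar> < e'"] by auto
    define d' where "d' = d / (real DIM('v) + 1)"
    have d': "d' > 0" using d by (simp add: d'_def)
    show "\<exists>d>0. \<forall>y. norm (y - p) < d \<longrightarrow> norm (H y - H p - (\<Sum>b\<in>Basis. ((y - p) \<bullet> b) * Db b p)) \<le> e * norm (y - p)"
    proof (intro exI[of _ d'] conjI allI impI d')
      fix y assume yd: "norm (y - p) < d'"
      define h where "h = y - p"
      have hd: "(real DIM('v) + 1) * norm h < d" using yd d by (simp add: h_def d'_def field_simps)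
      have main: "\<bar>H (p + (\<Sum>b\<in>S. (h \<bullet> b) *\<^sub>R b)) - H p - (\<Sum>b\<in>S. (h \<bullet> b) * Db b p)\<bar> \<le> real (card S) * e' * norm h"
        if "S \<subseteq> Basis" for S
      proof -
        have "finite S" by (rule finite_subset[OF that finite_Basis])
        then show ?thesis using that
        proof (induction S rule: finite_subset_induct'[where A=Basis])
          case empty
          then show ?case by simp
        next
          case (insert c F)
          define q where "q = p + (\<Sum>b\<in>F. (h \<bullet> b) *\<^sub>R b)"
          have FB: "F \<subseteq> Basis" using insert.hyps by auto
          have cardF: "real (card F) \<le> real DIM('v)"
            using FB card_mono[of Basis F] by auto
          have nF: "norm (\<Sum>b\<in>F. (h \<bullet> b) *\<^sub>R b) \<le> real (card F) * norm h"
          proof -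
            have "norm (\<Sum>b\<in>F. (h \<bullet> b) *\<^sub>R b) \<le> (\<Sum>b\<in>F. norm ((h \<bullet> b) *\<^sub>R b))"
              by (rule norm_sum)
            also have "\<dots> \<le> (\<Sum>b\<in>F. norm h)"
              using insert by (intro sum_mono) (auto simp: Basis_le_norm subset_iff)
            finally show ?thesis by simp
          qed
          have hc: "\<bar>h \<bullet> c\<bar> \<le> norm h" using insert by (simp add: Basis_le_norm)
          define g where "g s = H (q + s *\<^sub>R c) - s * Db c p" for s
          define S where "S = closed_segment 0 (h \<bullet> c)"
          have gd: "(g has_field_derivative (Db c (q + z *\<^sub>R c) - Db c p)) (at z within S)" for z
          proof -
            have 1: "((\<lambda>s. H (q + s *\<^sub>R c)) has_real_derivative Db c (q + z *\<^sub>R c)) (at z)"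
              by (rule line_deriv_at[where D="Db c"], rule der, rule insert)
            have 2: "((\<lambda>s. s * Db c p) has_real_derivative Db c p) (at z)"
              by (auto intro!: derivative_eq_intros)
            show ?thesis unfolding g_def
              by (rule has_field_derivative_at_within, rule DERIV_diff[OF 1 2])
          qed
          have gb: "norm (Db c (q + z *\<^sub>R c) - Db c p) \<le> e'" if z: "z \<in> S" for z
          proof -
            have "\<bar>z\<bar> \<le> \<bar>h \<bullet> c\<bar>" using z by (auto simp: S_def closed_segment_eq_real_ivl split: if_splits)
            then have zh: "\<bar>z\<bar> \<le> norm h" using hc by linarith
            have nc: "norm (z *\<^sub>R c) = \<bar>z\<bar>" using insert by simp
            have "norm ((\<Sum>b\<in>F. (h \<bullet> b) *\<^sub>R b) + z *\<^sub>R c) \<le> norm (\<Sum>b\<in>F. (h \<bullet> b) *\<^sub>R b) + norm (z *\<^sub>R c)"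
              by (rule norm_triangle_ineq)
            also have "\<dots> \<le> real (card F) * norm h + norm h" using nF zh nc by linarith
            also have "\<dots> \<le> (real DIM('v) + 1) * norm h" using mult_right_mono[OF cardF norm_ge_zero[of h]] by (simp add: algebra_simps)
            finally have "norm ((\<Sum>b\<in>F. (h \<bullet> b) *\<^sub>R b) + z *\<^sub>R c) \<le> (real DIM('v) + 1) * norm h" .
            then have "dist (q + z *\<^sub>R c) p < d" using hd by (simp add: q_def dist_norm)
            then show ?thesis using dd[of c] insert by fastforce
          qed
          have "norm (g (h \<bullet> c) - g 0) \<le> e' * norm (h \<bullet> c - 0)"
            by (rule field_differentiable_bound[OF _ gd gb]) (auto simp: S_def)
          then have step: "\<bar>H (q + (h \<bullet> c) *\<^sub>R c) - H q - (h \<bullet> c) * Db c p\<bar> \<le> e' * norm h"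
          proof -
            have "e' * norm (h \<bullet> c - 0) \<le> e' * norm h" using hc e' by (simp add: mult_left_mono)
            then show ?thesis using \<open>norm (g (h \<bullet> c) - g 0) \<le> e' * norm (h \<bullet> c - 0)\<close>
              by (simp add: g_def algebra_simps)
          qed
          have eq1: "p + (\<Sum>b\<in>insert c F. (h \<bullet> b) *\<^sub>R b) = q + (h \<bullet> c) *\<^sub>R c"
            using insert by (simp add: q_def algebra_simps)
          have eq2: "(\<Sum>b\<in>insert c F. (h \<bullet> b) * Db b p) = (h \<bullet> c) * Db c p + (\<Sum>b\<in>F. (h \<bullet> b) * Db b p)"
            using insert by simp
          have IH: "\<bar>H q - H p - (\<Sum>b\<in>F. (h \<bullet> b) * Db b p)\<bar> \<le> real (card F) * e' * norm h"
            using insert.IH by (simp add: q_def)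
          have "real (card (insert c F)) = real (card F) + 1" using insert by simp
          note cardI = this
          let ?X = "H (q + (h \<bullet> c) *\<^sub>R c)" and ?a = "(h \<bullet> c) * Db c p" and ?S = "(\<Sum>b\<in>F. (h \<bullet> b) * Db b p)"
          have tri: "\<bar>?X - H p - (?a + ?S)\<bar> \<le> \<bar>?X - H q - ?a\<bar> + \<bar>H q - H p - ?S\<bar>"
            using abs_triangle_ineq[of "?X - H q - ?a" "H q - H p - ?S"] by (simp add: algebra_simps)
          have "\<bar>?X - H p - (?a + ?S)\<bar> \<le> e' * norm h + real (card F) * e' * norm h"
            using tri IH step by linarith
          also have "\<dots> = real (card (insert c F)) * e' * norm h" using cardI by (simp add: algebra_simps)
          finally show ?case unfolding eq1 eq2 .
        qed
      qed
      from main[OF order_refl] have "\<bar>H (p + h) - H p - (\<Sum>b\<in>Basis. (h \<bullet> b) * Db b p)\<bar> \<le> real DIM('v) * e' * norm h"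
        by (simp add: euclidean_representation)
      then show "norm (H y - H p - (\<Sum>b\<in>Basis. ((y - p) \<bullet> b) * Db b p)) \<le> e * norm (y - p)"
        by (simp add: h_def e'_def)
    qed
  qed
qed




lemma schwarz_aux:
  fixes H :: "'v::real_normed_vector \<Rightarrow> real"
  assumes da: "\<And>q. ((\<lambda>s. H (q + s *\<^sub>R a)) has_real_derivative Da q) (at 0)"
   and db: "\<And>q. ((\<lambda>s. H (q + s *\<^sub>R b)) has_real_derivative Db q) (at 0)"
   and dab: "\<And>q. ((\<lambda>s. Db (q + s *\<^sub>R a)) has_real_derivative Dab q) (at 0)"
   and dba: "\<And>q. ((\<lambda>s. Da (q + s *\<^sub>R b)) has_real_derivative Dba q) (at 0)"
   and r: "r > 0"
  shows "\<exists>s1 t1 s2 t2. s1 \<in> {0..r} \<and> t1 \<in> {0..r} \<and> s2 \<in> {0..r} \<and> t2 \<in> {0..r} \<and>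
           Dba (p + s1 *\<^sub>R a + t1 *\<^sub>R b) = Dab (p + s2 *\<^sub>R a + t2 *\<^sub>R b)"
proof -
  define \<Delta> where "\<Delta> = H (p + r *\<^sub>R a + r *\<^sub>R b) - H (p + r *\<^sub>R a) - H (p + r *\<^sub>R b) + H p"
  define g where "g s = H ((p + r *\<^sub>R b) + s *\<^sub>R a) - H (p + s *\<^sub>R a)" for s
  have "\<And>x. 0 \<le> x \<Longrightarrow> x \<le> r \<Longrightarrow> (g has_real_derivative (Da ((p + r *\<^sub>R b) + x *\<^sub>R a) - Da (p + x *\<^sub>R a))) (at x)"
    unfolding g_def by (intro DERIV_diff line_deriv_at[where D=Da] da)
  from MVT2[OF r this] obtain s1 where s1: "0 < s1" "s1 < r"
    and g: "g r - g 0 = (r - 0) * (Da ((p + r *\<^sub>R b) + s1 *\<^sub>R a) - Da (p + s1 *\<^sub>R a))" by blast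
  define k where "k t = Da ((p + s1 *\<^sub>R a) + t *\<^sub>R b)" for t
  have "\<And>x. 0 \<le> x \<Longrightarrow> x \<le> r \<Longrightarrow> (k has_real_derivative Dba ((p + s1 *\<^sub>R a) + x *\<^sub>R b)) (at x)"
    unfolding k_def by (intro line_deriv_at[where D=Dba] dba)
  from MVT2[OF r this] obtain t1 where t1: "0 < t1" "t1 < r"
    and k: "k r - k 0 = (r - 0) * Dba ((p + s1 *\<^sub>R a) + t1 *\<^sub>R b)" by blast
  have D1: "\<Delta> = r * r * Dba (p + s1 *\<^sub>R a + t1 *\<^sub>R b)"
  proof -
    have "\<Delta> = g r - g 0" by (simp add: \<Delta>_def g_def algebra_simps)
    also have "\<dots> = r * (k r - k 0)" using g by (simp add: k_def algebra_simps)
    also have "\<dots> = r * r * Dba (p + s1 *\<^sub>R a + t1 *\<^sub>R b)" using k by simp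
    finally show ?thesis .
  qed
  define m where "m t = H ((p + r *\<^sub>R a) + t *\<^sub>R b) - H (p + t *\<^sub>R b)" for t
  have "\<And>x. 0 \<le> x \<Longrightarrow> x \<le> r \<Longrightarrow> (m has_real_derivative (Db ((p + r *\<^sub>R a) + x *\<^sub>R b) - Db (p + x *\<^sub>R b))) (at x)"
    unfolding m_def by (intro DERIV_diff line_deriv_at[where D=Db] db)
  from MVT2[OF r this] obtain t2 where t2: "0 < t2" "t2 < r"
    and m: "m r - m 0 = (r - 0) * (Db ((p + r *\<^sub>R a) + t2 *\<^sub>R b) - Db (p + t2 *\<^sub>R b))" by blast
  define n where "n s = Db ((p + t2 *\<^sub>R b) + s *\<^sub>R a)" for s
  have "\<And>x. 0 \<le> x \<Longrightarrow> x \<le> r \<Longrightarrow> (n has_real_derivative Dab ((p + t2 *\<^sub>R b) + x *\<^sub>R a)) (at x)"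
    unfolding n_def by (intro line_deriv_at[where D=Dab] dab)
  from MVT2[OF r this] obtain s2 where s2: "0 < s2" "s2 < r"
    and n: "n r - n 0 = (r - 0) * Dab ((p + t2 *\<^sub>R b) + s2 *\<^sub>R a)" by blast
  have D2: "\<Delta> = r * r * Dab (p + s2 *\<^sub>R a + t2 *\<^sub>R b)"
  proof -
    have "\<Delta> = m r - m 0" by (simp add: \<Delta>_def m_def algebra_simps)
    also have "\<dots> = r * (n r - n 0)" using m by (simp add: n_def algebra_simps)
    also have "\<dots> = r * r * Dab (p + s2 *\<^sub>R a + t2 *\<^sub>R b)" using n by (simp add: algebra_simps)
    finally show ?thesis .
  qed
  from D1 D2 r have "Dba (p + s1 *\<^sub>R a + t1 *\<^sub>R b) = Dab (p + s2 *\<^sub>R a + t2 *\<^sub>R b)" by simp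
  then show ?thesis using s1 t1 s2 t2 by (intro exI[of _ s1] exI[of _ t1] exI[of _ s2] exI[of _ t2]) auto
qed

lemma abs_contra_aux:
  fixes x A B :: real
  assumes "\<bar>x - A\<bar> < \<bar>A - B\<bar> / 2" "\<bar>x - B\<bar> < \<bar>A - B\<bar> / 2"
  shows False
  using assms by (auto simp: abs_if split: if_split_asm)

lemma schwarz:
  fixes H :: "'v::real_normed_vector \<Rightarrow> real"
  assumes da: "\<And>q. ((\<lambda>s. H (q + s *\<^sub>R a)) has_real_derivative Da q) (at 0)"
   and db: "\<And>q. ((\<lambda>s. H (q + s *\<^sub>R b)) has_real_derivative Db q) (at 0)"
   and dab: "\<And>q. ((\<lambda>s. Db (q + s *\<^sub>R a)) has_real_derivative Dab q) (at 0)"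
   and dba: "\<And>q. ((\<lambda>s. Da (q + s *\<^sub>R b)) has_real_derivative Dba q) (at 0)"
   and cab: "continuous_on UNIV Dab" and cba: "continuous_on UNIV Dba"
  shows "Dab p = Dba p"
proof (rule ccontr)
  assume ne: "Dab p \<noteq> Dba p"
  define \<epsilon> where "\<epsilon> = \<bar>Dab p - Dba p\<bar> / 2"
  have \<epsilon>: "\<epsilon> > 0" using ne by (simp add: \<epsilon>_def)
  obtain d1 where d1: "d1 > 0" "\<And>q. dist q p < d1 \<Longrightarrow> \<bar>Dab q - Dab p\<bar> < \<epsilon>"
    using cab \<epsilon> unfolding continuous_on_iff dist_real_def by blast
  obtain d2 where d2: "d2 > 0" "\<And>q. dist q p < d2 \<Longrightarrow> \<bar>Dba q - Dba p\<bar> < \<epsilon>"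
    using cba \<epsilon> unfolding continuous_on_iff dist_real_def by blast
  define r where "r = min d1 d2 / (2 * (norm a + norm b + 1))"
  have den: "0 < 2 * (norm a + norm b + 1)" by (smt (verit) norm_ge_zero)
  have r: "r > 0" using d1 d2 den by (simp add: r_def)
  have rb: "r * (norm a + norm b) < min d1 d2"
  proof -
    have "r * (norm a + norm b) \<le> r * (norm a + norm b + 1)" using r by simp
    also have "\<dots> = min d1 d2 / 2" unfolding r_def
      using den by (simp add: field_simps)
    also have "\<dots> < min d1 d2" using d1 d2 by (auto simp: min_def)
    finally show ?thesis .
  qed
  obtain s1 t1 s2 t2 where st: "s1 \<in> {0..r}" "t1 \<in> {0..r}" "s2 \<in> {0..r}" "t2 \<in> {0..r}"
    and eq: "Dba (p + s1 *\<^sub>R a + t1 *\<^sub>R b) = Dab (p + s2 *\<^sub>R a + t2 *\<^sub>R b)"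
    using schwarz_aux[OF da db dab dba r] by blast
  have dist_le: "dist (p + s *\<^sub>R a + t *\<^sub>R b) p < min d1 d2" if "s \<in> {0..r}" "t \<in> {0..r}" for s t
  proof -
    have "dist (p + s *\<^sub>R a + t *\<^sub>R b) p = norm (s *\<^sub>R a + t *\<^sub>R b)" by (simp add: dist_norm)
    also have "\<dots> \<le> \<bar>s\<bar> * norm a + \<bar>t\<bar> * norm b"
      by (metis norm_scaleR norm_triangle_ineq)
    also have "\<dots> \<le> r * norm a + r * norm b"
      using that by (intro add_mono mult_right_mono) auto
    finally show ?thesis using rb by (simp add: algebra_simps)
  qed
  have "\<bar>Dab (p + s2 *\<^sub>R a + t2 *\<^sub>R b) - Dab p\<bar> < \<epsilon>" using d1(2) dist_le[OF st(3,4)] by simp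
  moreover have "\<bar>Dba (p + s1 *\<^sub>R a + t1 *\<^sub>R b) - Dba p\<bar> < \<epsilon>" using d2(2) dist_le[OF st(1,2)] by simp
  ultimately show False using eq unfolding \<epsilon>_def by (metis abs_contra_aux)
qed




definition C1' :: "('v::euclidean_space \<Rightarrow> real) \<Rightarrow> bool" where
  "C1' F \<longleftrightarrow> (\<forall>b\<in>Basis. \<forall>p. ((\<lambda>s. F (p + s *\<^sub>R b)) has_real_derivative dd b F p) (at 0)) \<and>
     (\<forall>b\<in>Basis. continuous_on UNIV (dd b F))"

lemma C2_C1: "C2 F \<Longrightarrow> C1' F"
  unfolding C2_def C1'_def by blast

lemma C2_C1_dd: "C2 F \<Longrightarrow> e \<in> Basis \<Longrightarrow> C1' (dd e F)"
  unfolding C2_def C1'_def by blast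

lemma C2_line: "C2 F \<Longrightarrow> b \<in> Basis \<Longrightarrow> ((\<lambda>s. F (p + s *\<^sub>R b)) has_real_derivative dd b F p) (at 0)"
  unfolding C2_def by blast

lemma C2_line2: "C2 F \<Longrightarrow> b \<in> Basis \<Longrightarrow> e \<in> Basis \<Longrightarrow>
   ((\<lambda>s. dd e F (p + s *\<^sub>R b)) has_real_derivative dd b (dd e F) p) (at 0)"
  unfolding C2_def by blast

lemma C1_frechet:
  fixes F :: "'v::euclidean_space \<Rightarrow> real"
  assumes "C1' F"
  shows "\<exists>D. (F has_derivative D) (at p) \<and> (\<forall>b\<in>Basis. D b = dd b F p)"
proof -
  have "(F has_derivative (\<lambda>h. \<Sum>b\<in>Basis. (h \<bullet> b) * dd b F p)) (at p)"
    using assms unfolding C1'_def by (intro frechet_partials) auto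
  moreover have "(\<Sum>b'\<in>Basis. (b \<bullet> b') * dd b' F p) = dd b F p" if "b \<in> Basis" for b
  proof -
    have "(\<Sum>b'\<in>Basis. (b \<bullet> b') * dd b' F p) = (\<Sum>b'\<in>Basis. if b = b' then dd b' F p else 0)"
      using that by (intro sum.cong) (auto simp: inner_Basis)
    also have "\<dots> = dd b F p" using that by simp
    finally show ?thesis .
  qed
  ultimately show ?thesis by blast
qed

lemma ex_in_Basis: "(axis i (1::real), 0::real) \<in> (Basis :: ((real^'n::finite) \<times> real) set)"
  by (simp add: Basis_prod_def)
lemma ey_in_Basis: "(0, 1::real) \<in> (Basis :: ((real^'n::finite) \<times> real) set)"
  by (simp add: Basis_prod_def)
lemma axis_Basis: "axis i (1::real) \<in> (Basis :: (real^'n::finite) set)"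
  by simp

lemma chain_prod:
  fixes F :: "(real^'n::finite) \<times> real \<Rightarrow> real" and P :: "real^'n \<Rightarrow> real"
  assumes F: "C1' F" and P: "((\<lambda>s. P (x + s *\<^sub>R axis i 1)) has_real_derivative dP) (at 0)"
  shows "((\<lambda>s. F (x + s *\<^sub>R axis i 1, P (x + s *\<^sub>R axis i 1))) has_real_derivative
           (dd (axis i 1, 0) F (x, P x) + dP * dd (0, 1) F (x, P x))) (at 0)"
proof -
  obtain D where D: "(F has_derivative D) (at (x, P x))" and Db: "\<forall>b\<in>Basis. D b = dd b F (x, P x)"
    using C1_frechet[OF F] by blast
  have lin: "linear D" using D by (rule has_derivative_linear)
  have g1: "((\<lambda>s. x + s *\<^sub>R axis i 1) has_vector_derivative axis i 1) (at 0)"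
    by (auto intro!: derivative_eq_intros simp: has_vector_derivative_def)
  have g2: "((\<lambda>s. P (x + s *\<^sub>R axis i 1)) has_vector_derivative dP) (at 0)"
    using P by (simp add: has_real_derivative_iff_has_vector_derivative)
  have g: "((\<lambda>s. (x + s *\<^sub>R axis i 1, P (x + s *\<^sub>R axis i 1))) has_vector_derivative (axis i 1, dP)) (at 0)"
    by (rule has_vector_derivative_Pair[OF g1 g2])
  have D': "(F has_derivative D) (at ((\<lambda>s. (x + s *\<^sub>R axis i 1, P (x + s *\<^sub>R axis i 1))) 0) within (\<lambda>s. (x + s *\<^sub>R axis i 1, P (x + s *\<^sub>R axis i 1))) ` UNIV)"
    using D by (auto intro: has_derivative_at_withinI)
  have "(F \<circ> (\<lambda>s. (x + s *\<^sub>R axis i 1, P (x + s *\<^sub>R axis i 1))) has_vector_derivative D (axis i 1, dP)) (at 0)"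
    using vector_derivative_diff_chain_within[OF g D'] by simp
  moreover have "D (axis i 1, dP) = dd (axis i 1, 0) F (x, P x) + dP * dd (0, 1) F (x, P x)"
  proof -
    have "D (axis i 1, dP) = D ((axis i (1::real), 0::real) + dP *\<^sub>R (0, 1))" by simp
    also have "\<dots> = D (axis i 1, 0) + dP *\<^sub>R D (0, 1)"
      by (simp only: linear_add[OF lin] real_vector.linear_scale[OF lin])
    finally have "D (axis i 1, dP) = D (axis i 1, 0) + dP *\<^sub>R D (0, 1)" .
    then show ?thesis using Db[rule_format, OF ex_in_Basis] Db[rule_format, OF ey_in_Basis] by simp
  qed
  ultimately show ?thesis
    by (simp add: has_real_derivative_iff_has_vector_derivative o_def)
qed




lemma pd_comp_deriv:
  fixes F :: "(real^'n::finite) \<times> real \<Rightarrow> real" and P :: "real^'n \<Rightarrow> real"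
  assumes "C1' F" "C2 P"
  shows "((\<lambda>s. F (x + s *\<^sub>R axis i 1, P (x + s *\<^sub>R axis i 1))) has_real_derivative
           (dd (axis i 1, 0) F (x, P x) + pd i P x * dd (0, 1) F (x, P x))) (at 0)"
  using chain_prod[OF assms(1) C2_line[OF assms(2) axis_Basis]] by (simp add: pd_def)

lemma pd_eq_deriv: "pd i G x = deriv (\<lambda>s. G (x + s *\<^sub>R axis i 1)) 0"
  by (simp add: pd_def dd_def)

lemma pd_comp:
  fixes F :: "(real^'n::finite) \<times> real \<Rightarrow> real" and P :: "real^'n \<Rightarrow> real"
  assumes "C1' F" "C2 P"
  shows "pd i (\<lambda>x. F (x, P x)) x = dd (axis i 1, 0) F (x, P x) + pd i P x * dd (0, 1) F (x, P x)"
  unfolding pd_eq_deriv[of i "\<lambda>x. F (x, P x)"]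
  by (rule DERIV_imp_deriv, rule pd_comp_deriv[OF assms])

lemma pd_fun: "pd j P = dd (axis j 1) P"
  by (rule ext) (simp add: pd_def)

lemma pd_pd_comp:
  fixes F :: "(real^'n::finite) \<times> real \<Rightarrow> real" and P :: "real^'n \<Rightarrow> real"
  assumes F: "C2 F" and P: "C2 P"
  shows "pd i (pd j (\<lambda>x. F (x, P x))) x =
     dd (axis i 1, 0) (dd (axis j 1, 0) F) (x, P x) + pd i P x * dd (0, 1) (dd (axis j 1, 0) F) (x, P x)
     + pd i (pd j P) x * dd (0, 1) F (x, P x)
     + pd j P x * (dd (axis i 1, 0) (dd (0, 1) F) (x, P x) + pd i P x * dd (0, 1) (dd (0, 1) F) (x, P x))"
proof -
  have eq: "pd j (\<lambda>x. F (x, P x)) = (\<lambda>x. dd (axis j 1, 0) F (x, P x) + pd j P x * dd (0, 1) F (x, P x))"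
    by (rule ext, rule pd_comp[OF C2_C1[OF F] P])
  have d1: "((\<lambda>s. dd (axis j 1, 0) F (x + s *\<^sub>R axis i 1, P (x + s *\<^sub>R axis i 1))) has_real_derivative
           (dd (axis i 1, 0) (dd (axis j 1, 0) F) (x, P x) + pd i P x * dd (0, 1) (dd (axis j 1, 0) F) (x, P x))) (at 0)"
    by (rule pd_comp_deriv[OF C2_C1_dd[OF F ex_in_Basis] P])
  have d2: "((\<lambda>s. dd (0, 1) F (x + s *\<^sub>R axis i 1, P (x + s *\<^sub>R axis i 1))) has_real_derivative
           (dd (axis i 1, 0) (dd (0, 1) F) (x, P x) + pd i P x * dd (0, 1) (dd (0, 1) F) (x, P x))) (at 0)"
    by (rule pd_comp_deriv[OF C2_C1_dd[OF F ey_in_Basis] P])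
  have d3: "((\<lambda>s. pd j P (x + s *\<^sub>R axis i 1)) has_real_derivative pd i (pd j P) x) (at 0)"
    unfolding pd_fun[of j P] using C2_line2[OF P axis_Basis axis_Basis] by (simp add: pd_def)
  have "((\<lambda>s. dd (axis j 1, 0) F (x + s *\<^sub>R axis i 1, P (x + s *\<^sub>R axis i 1))
           + pd j P (x + s *\<^sub>R axis i 1) * dd (0, 1) F (x + s *\<^sub>R axis i 1, P (x + s *\<^sub>R axis i 1)))
        has_real_derivative
          (dd (axis i 1, 0) (dd (axis j 1, 0) F) (x, P x) + pd i P x * dd (0, 1) (dd (axis j 1, 0) F) (x, P x))
          + (pd i (pd j P) x * dd (0, 1) F (x, P x) + pd j P x *
             (dd (axis i 1, 0) (dd (0, 1) F) (x, P x) + pd i P x * dd (0, 1) (dd (0, 1) F) (x, P x)))) (at 0)"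
    by (rule DERIV_cong[OF DERIV_add[OF d1 DERIV_mult[OF d3 d2]]]) (simp add: algebra_simps)
  then have "deriv (\<lambda>s. pd j (\<lambda>x. F (x, P x)) (x + s *\<^sub>R axis i 1)) 0 =
          (dd (axis i 1, 0) (dd (axis j 1, 0) F) (x, P x) + pd i P x * dd (0, 1) (dd (axis j 1, 0) F) (x, P x))
          + (pd i (pd j P) x * dd (0, 1) F (x, P x) + pd j P x *
             (dd (axis i 1, 0) (dd (0, 1) F) (x, P x) + pd i P x * dd (0, 1) (dd (0, 1) F) (x, P x)))"
    unfolding eq by (rule DERIV_imp_deriv)
  then show ?thesis unfolding pd_eq_deriv[of i "pd j (\<lambda>x. F (x, P x))"] by (simp add: algebra_simps)
qed

lemma schwarz_xy:
  fixes F :: "(real^'n::finite) \<times> real \<Rightarrow> real"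
  assumes F: "C2 F"
  shows "dd (0, 1) (dd (axis j 1, 0) F) p = dd (axis j 1, 0) (dd (0, 1) F) p"
proof (rule schwarz[where H=F and a="(0,1)" and b="(axis j 1, 0)"])
  show "\<And>q. ((\<lambda>s. F (q + s *\<^sub>R (0, 1))) has_real_derivative dd (0, 1) F q) (at 0)"
    by (rule C2_line[OF F ey_in_Basis])
  show "\<And>q. ((\<lambda>s. F (q + s *\<^sub>R (axis j 1, 0))) has_real_derivative dd (axis j 1, 0) F q) (at 0)"
    by (rule C2_line[OF F ex_in_Basis])
  show "\<And>q. ((\<lambda>s. dd (axis j 1, 0) F (q + s *\<^sub>R (0, 1))) has_real_derivative dd (0, 1) (dd (axis j 1, 0) F) q) (at 0)"
    by (rule C2_line2[OF F ey_in_Basis ex_in_Basis])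
  show "\<And>q. ((\<lambda>s. dd (0, 1) F (q + s *\<^sub>R (axis j 1, 0))) has_real_derivative dd (axis j 1, 0) (dd (0, 1) F) q) (at 0)"
    by (rule C2_line2[OF F ex_in_Basis ey_in_Basis])
  show "continuous_on UNIV (dd (0, 1) (dd (axis j 1, 0) F))"
    using F ey_in_Basis ex_in_Basis unfolding C2_def by blast
  show "continuous_on UNIV (dd (axis j 1, 0) (dd (0, 1) F))"
    using F ey_in_Basis ex_in_Basis unfolding C2_def by blast
qed




lemma quad_form:
  fixes A :: "real^'d::finite^'n::finite"
  shows "(transpose A *v u) \<bullet> (transpose A *v w) = (\<Sum>i\<in>UNIV. \<Sum>j\<in>UNIV. (A ** transpose A) $ i $ j * (u $ i * w $ j))"
proof -
  have "(transpose A *v u) \<bullet> (transpose A *v w) = (\<Sum>k\<in>UNIV. (\<Sum>i\<in>UNIV. A $ i $ k * u $ i) * (\<Sum>j\<in>UNIV. A $ j $ k * w $ j))"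
    by (simp add: inner_vec_def matrix_vector_mult_def transpose_def mult.commute)
  also have "\<dots> = (\<Sum>k\<in>UNIV. \<Sum>i\<in>UNIV. \<Sum>j\<in>UNIV. A $ i $ k * A $ j $ k * (u $ i * w $ j))"
    by (simp add: sum_product algebra_simps)
  also have "\<dots> = (\<Sum>i\<in>UNIV. \<Sum>k\<in>UNIV. \<Sum>j\<in>UNIV. A $ i $ k * A $ j $ k * (u $ i * w $ j))"
    by (rule sum.swap)
  also have "\<dots> = (\<Sum>i\<in>UNIV. \<Sum>j\<in>UNIV. \<Sum>k\<in>UNIV. A $ i $ k * A $ j $ k * (u $ i * w $ j))"
    by (intro sum.cong refl sum.swap)
  also have "\<dots> = (\<Sum>i\<in>UNIV. \<Sum>j\<in>UNIV. (A ** transpose A) $ i $ j * (u $ i * w $ j))"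
    by (simp add: matrix_matrix_mult_def transpose_def sum_distrib_right)
  finally show ?thesis .
qed

lemma AAt_sym:
  fixes A :: "real^'d::finite^'n::finite"
  shows "(A ** transpose A) $ i $ j = (A ** transpose A) $ j $ i"
  by (simp add: matrix_matrix_mult_def transpose_def mult.commute)

lemma Lop_algebra:
  fixes A :: "real^'d::finite^'n::finite" and bb :: "real^'n"
  assumes p1: "\<And>i. PsiA i = GA i + c * PA i"
    and p2: "\<And>i j. PsiB i j = GB i j + PA i * X j + PB i j * c + PA j * (X i + PA i * cc)"
  shows "(1/2) * (\<Sum>i\<in>UNIV. \<Sum>j\<in>UNIV. (A ** transpose A) $ i $ j * PsiB i j) + (\<Sum>i\<in>UNIV. bb $ i * PsiA i)
       = ((1/2) * (\<Sum>i\<in>UNIV. \<Sum>j\<in>UNIV. (A ** transpose A) $ i $ j * GB i j) + (\<Sum>i\<in>UNIV. bb $ i * GA i))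
         + c * ((1/2) * (\<Sum>i\<in>UNIV. \<Sum>j\<in>UNIV. (A ** transpose A) $ i $ j * PB i j) + (\<Sum>i\<in>UNIV. bb $ i * PA i))
         + (transpose A *v (\<chi> i. X i)) \<bullet> (transpose A *v (\<chi> i. PA i))
         + cc / 2 * (norm (transpose A *v (\<chi> i. PA i)))\<^sup>2"
proof -
  define a where "a i j = (A ** transpose A) $ i $ j" for i j
  have sym: "a i j = a j i" for i j unfolding a_def by (rule AAt_sym)
  have swap: "(\<Sum>i\<in>UNIV. \<Sum>j\<in>UNIV. a i j * (PA i * X j)) = (\<Sum>i\<in>UNIV. \<Sum>j\<in>UNIV. a i j * (X i * PA j))"
  proof -
    have "(\<Sum>i\<in>UNIV. \<Sum>j\<in>UNIV. a i j * (PA i * X j)) = (\<Sum>j\<in>UNIV. \<Sum>i\<in>UNIV. a i j * (PA i * X j))"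
      by (rule sum.swap)
    also have "\<dots> = (\<Sum>j\<in>UNIV. \<Sum>i\<in>UNIV. a j i * (X j * PA i))"
      by (intro sum.cong refl) (simp add: sym[of _ ] mult.commute)
    finally show ?thesis .
  qed
  have q1: "(transpose A *v (\<chi> i. X i)) \<bullet> (transpose A *v (\<chi> i. PA i)) = (\<Sum>i\<in>UNIV. \<Sum>j\<in>UNIV. a i j * (X i * PA j))"
    unfolding quad_form a_def by simp
  have q2: "(norm (transpose A *v (\<chi> i. PA i)))\<^sup>2 = (\<Sum>i\<in>UNIV. \<Sum>j\<in>UNIV. a i j * (PA i * PA j))"
    unfolding power2_norm_eq_inner quad_form a_def by simp
  have expand: "(\<Sum>i\<in>UNIV. \<Sum>j\<in>UNIV. a i j * PsiB i j)
      = (\<Sum>i\<in>UNIV. \<Sum>j\<in>UNIV. a i j * GB i j) + (\<Sum>i\<in>UNIV. \<Sum>j\<in>UNIV. a i j * (PA i * X j))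
        + c * (\<Sum>i\<in>UNIV. \<Sum>j\<in>UNIV. a i j * PB i j) + (\<Sum>i\<in>UNIV. \<Sum>j\<in>UNIV. a i j * (X i * PA j))
        + cc * (\<Sum>i\<in>UNIV. \<Sum>j\<in>UNIV. a i j * (PA i * PA j))"
    by (simp add: p2 sum.distrib sum_distrib_left algebra_simps)
  have expand1: "(\<Sum>i\<in>UNIV. bb $ i * PsiA i) = (\<Sum>i\<in>UNIV. bb $ i * GA i) + c * (\<Sum>i\<in>UNIV. bb $ i * PA i)"
    by (simp add: p1 sum.distrib sum_distrib_left algebra_simps)
  show ?thesis
    unfolding a_def[symmetric] q1 q2 expand expand1 swap by (simp add: algebra_simps)
qed




lemma L_px:
  fixes F :: "(real^'n::finite) \<times> real \<Rightarrow> real"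
  shows "pd i (\<lambda>x'. F (x', y)) x = dd (axis i 1, 0) F (x, y)"
  by (simp add: pd_def dd_def)

lemma L_py:
  fixes G :: "(real^'n::finite) \<times> real \<Rightarrow> real"
  assumes "\<And>q. ((\<lambda>s. G (q + s *\<^sub>R (0, 1))) has_real_derivative D q) (at 0)"
  shows "deriv (\<lambda>y'. G (x, y')) y = D (x, y)"
proof -
  have "((\<lambda>s. G (x, s + y)) has_real_derivative D (x, y)) (at 0)"
    using assms[of "(x, y)"] by (simp add: add.commute)
  then have "((\<lambda>y'. G (x, y')) has_real_derivative D (x, y)) (at (0 + y))"
    using DERIV_shift[of "\<lambda>y'. G (x, y')" "D (x, y)" 0 y] by simp
  then show ?thesis by (intro DERIV_imp_deriv) simp
qed

lemma comp_formulas: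
  fixes E :: "real^'n::finite \<Rightarrow> real \<Rightarrow> real" and P :: "real^'n \<Rightarrow> real"
    and \<sigma> :: "real^'n \<Rightarrow> real^'d::finite^'n" and b :: "real^'n \<Rightarrow> real^'n"
  assumes E: "C2 (\<lambda>(x,y). E x y)" and P: "C2 P"
  shows "grad (\<lambda>x. E x (P x)) x = grad (\<lambda>x'. E x' (P x)) x + deriv (\<lambda>y'. E x y') (P x) *\<^sub>R grad P x"
    and "Lop \<sigma> b (\<lambda>x. E x (P x)) x = Lop \<sigma> b (\<lambda>x'. E x' (P x)) x + deriv (\<lambda>y'. E x y') (P x) * Lop \<sigma> b P x
          + sigDx \<sigma> (\<lambda>x'. deriv (\<lambda>y'. E x' y') (P x)) x \<bullet> sigDx \<sigma> P x
          + deriv (\<lambda>y'. deriv (\<lambda>y''. E x y'') y') (P x) / 2 * (norm (sigDx \<sigma> P x))\<^sup>2"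
proof -
  define F where "F = (\<lambda>(x,y). E x y)"
  have F: "C2 F" using E by (simp add: F_def)
  have psi: "(\<lambda>x. E x (P x)) = (\<lambda>x. F (x, P x))" by (simp add: F_def)
  have Fy: "dd (0, 1) F (x', y) = deriv (\<lambda>y'. E x' y') y" for x' y
    using L_py[of F "dd (0,1) F" x' y] C2_line[OF F ey_in_Basis] by (simp add: F_def)
  have Fx: "dd (axis i 1, 0) F (x', y) = pd i (\<lambda>x'. E x' y) x'" for i x' y
    using L_px[of i F y x'] by (simp add: F_def)
  have Fxx: "dd (axis i 1, 0) (dd (axis j 1, 0) F) (x', y) = pd i (pd j (\<lambda>x'. E x' y)) x'" for i j x' y
  proof -
    have "pd j (\<lambda>x'. E x' y) = (\<lambda>x'. dd (axis j 1, 0) F (x', y))" by (rule ext) (simp add: Fx)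
    then show ?thesis using L_px[of i "dd (axis j 1, 0) F" y x'] by simp
  qed
  have Fxy: "dd (axis i 1, 0) (dd (0, 1) F) (x', y) = pd i (\<lambda>x'. deriv (\<lambda>y'. E x' y') y) x'" for i x' y
  proof -
    have "(\<lambda>x'. deriv (\<lambda>y'. E x' y') y) = (\<lambda>x'. dd (0, 1) F (x', y))" by (rule ext) (simp add: Fy)
    then show ?thesis using L_px[of i "dd (0, 1) F" y x'] by simp
  qed
  have Fyx: "dd (0, 1) (dd (axis j 1, 0) F) p = dd (axis j 1, 0) (dd (0, 1) F) p" for j p
    by (rule schwarz_xy[OF F])
  have Fyy: "dd (0, 1) (dd (0, 1) F) (x, y) = deriv (\<lambda>y'. deriv (\<lambda>y''. E x y'') y') y" for y
  proof -
    have "deriv (\<lambda>y'. dd (0, 1) F (x, y')) y = dd (0, 1) (dd (0, 1) F) (x, y)"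
      by (rule L_py, rule C2_line2[OF F ey_in_Basis ey_in_Basis])
    then show ?thesis by (simp add: Fy)
  qed
  define y0 where "y0 = P x"
  define c where "c = deriv (\<lambda>y'. E x y') y0"
  have p1: "pd i (\<lambda>x. E x (P x)) x = pd i (\<lambda>x'. E x' y0) x + c * pd i P x" for i
    unfolding psi pd_comp[OF C2_C1[OF F] P] by (simp add: Fx Fy y0_def c_def)
  have p2: "pd i (pd j (\<lambda>x. E x (P x))) x = pd i (pd j (\<lambda>x'. E x' y0)) x
       + pd i P x * pd j (\<lambda>x'. deriv (\<lambda>y'. E x' y') y0) x + pd i (pd j P) x * c
       + pd j P x * (pd i (\<lambda>x'. deriv (\<lambda>y'. E x' y') y0) x + pd i P x * deriv (\<lambda>y'. deriv (\<lambda>y''. E x y'') y') y0)" for i j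
    unfolding psi pd_pd_comp[OF F P] by (simp add: Fxx Fyx Fxy Fy Fyy y0_def c_def)
  show "grad (\<lambda>x. E x (P x)) x = grad (\<lambda>x'. E x' (P x)) x + deriv (\<lambda>y'. E x y') (P x) *\<^sub>R grad P x"
    unfolding grad_def by (simp add: vec_eq_iff p1 y0_def c_def)
  show "Lop \<sigma> b (\<lambda>x. E x (P x)) x = Lop \<sigma> b (\<lambda>x'. E x' (P x)) x + deriv (\<lambda>y'. E x y') (P x) * Lop \<sigma> b P x
          + sigDx \<sigma> (\<lambda>x'. deriv (\<lambda>y'. E x' y') (P x)) x \<bullet> sigDx \<sigma> P x
          + deriv (\<lambda>y'. deriv (\<lambda>y''. E x y'') y') (P x) / 2 * (norm (sigDx \<sigma> P x))\<^sup>2"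
    unfolding Lop_def sigDx_def grad_def y0_def[symmetric] c_def[symmetric]
    by (rule Lop_algebra[where PsiA="\<lambda>i. pd i (\<lambda>x. E x (P x)) x" and PsiB="\<lambda>i j. pd i (pd j (\<lambda>x. E x (P x))) x"], rule p1, rule p2)
qed




lemma Dy_id: "Dy (\<lambda>t x y. y) t x y = 1"
  unfolding Dy_def by (rule DERIV_imp_deriv) (rule DERIV_ident)

lemma gDg_zero: "gDg (\<lambda>t x y. 0 :: real^'d::finite) t x y = 0"
  unfolding gDg_def by simp

lemma Aop_identity:
  fixes \<eta> :: "'a \<Rightarrow> real \<Rightarrow> real^'n::finite \<Rightarrow> real \<Rightarrow> real"
    and f :: "'a \<Rightarrow> real \<Rightarrow> real^'n \<Rightarrow> real \<Rightarrow> real^'d::finite \<Rightarrow> real"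
    and \<phi> :: "real \<Rightarrow> real^'n \<Rightarrow> real"
  assumes E: "C2 (\<lambda>(x,y). \<eta> \<omega> t x y)" and P: "C2 (\<phi> t)" and D: "Dy (\<eta> \<omega>) t x (\<phi> t x) > 0"
  shows "Aop \<sigma> b (f \<omega>) g (\<lambda>t x. \<eta> \<omega> t x (\<phi> t x)) t x - Dy (\<eta> \<omega>) t x (\<phi> t x) * Dt \<phi> t x
       = Dy (\<eta> \<omega>) t x (\<phi> t x) * (Aop \<sigma> b (ftilde \<sigma> b f g \<eta> \<omega>) (\<lambda>t x y. 0) \<phi> t x
                                   - Dy (\<lambda>t x y. y) t x (\<phi> t x) * Dt \<phi> t x)"
proof -
  note cf = comp_formulas(1)[OF E P, where x=x] comp_formulas(2)[OF E P, where x=x and \<sigma>=\<sigma> and b=b]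
  have cf1: "grad (\<lambda>x. \<eta> \<omega> t x (\<phi> t x)) x = grad (\<lambda>x'. \<eta> \<omega> t x' (\<phi> t x)) x + Dy (\<eta> \<omega>) t x (\<phi> t x) *\<^sub>R grad (\<phi> t) x"
    using cf(1) by (simp add: Dy_def)
  have cf2: "Lop \<sigma> b (\<lambda>x. \<eta> \<omega> t x (\<phi> t x)) x = Lop \<sigma> b (\<lambda>x'. \<eta> \<omega> t x' (\<phi> t x)) x + Dy (\<eta> \<omega>) t x (\<phi> t x) * Lop \<sigma> b (\<phi> t) x
          + sigDx \<sigma> (\<lambda>x'. Dy (\<eta> \<omega>) t x' (\<phi> t x)) x \<bullet> sigDx \<sigma> (\<phi> t) x
          + Dy (Dy (\<eta> \<omega>)) t x (\<phi> t x) / 2 * (norm (sigDx \<sigma> (\<phi> t) x))\<^sup>2"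
    using cf(2) by (simp add: Dy_def)
  have sg: "sigDx \<sigma> (\<lambda>x. \<eta> \<omega> t x (\<phi> t x)) x = sigDx \<sigma> (\<lambda>x'. \<eta> \<omega> t x' (\<phi> t x)) x + Dy (\<eta> \<omega>) t x (\<phi> t x) *\<^sub>R sigDx \<sigma> (\<phi> t) x"
    unfolding sigDx_def cf1 by (simp add: matrix_vector_right_distrib matrix_vector_mult_scaleR)
  show ?thesis
    unfolding Aop_def ftilde_def Dy_id gDg_zero
    using D by (simp add: cf2 sg field_simps)
qed

lemma bd_identity:
  fixes \<eta> :: "'a \<Rightarrow> real \<Rightarrow> real^'n::finite \<Rightarrow> real \<Rightarrow> real"
    and \<phi> :: "real \<Rightarrow> real^'n \<Rightarrow> real"
  assumes E: "C2 (\<lambda>(x,y). \<eta> \<omega> t x y)" and P: "C2 (\<phi> t)" and D: "Dy (\<eta> \<omega>) t x (\<phi> t x) > 0"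
  shows "- dnormal \<phi>G (\<lambda>x. \<eta> \<omega> t x (\<phi> t x)) x - h \<omega> t x (\<eta> \<omega> t x (\<phi> t x))
       = Dy (\<eta> \<omega>) t x (\<phi> t x) * (- dnormal \<phi>G (\<phi> t) x - htilde \<phi>G h \<eta> \<omega> t x (\<phi> t x))"
proof -
  note cf = comp_formulas[OF E P, where x=x]
  have cf1: "grad (\<lambda>x. \<eta> \<omega> t x (\<phi> t x)) x = grad (\<lambda>x'. \<eta> \<omega> t x' (\<phi> t x)) x + Dy (\<eta> \<omega>) t x (\<phi> t x) *\<^sub>R grad (\<phi> t) x"
    using cf(1) by (simp add: Dy_def)
  show ?thesis
    unfolding dnormal_def htilde_def cf1
    using D by (simp add: inner_add_left field_simps)
qed




lemma space_FB[simp]: "space (FB M B T t) = space M"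
  by (simp add: FB_def space_measure_of_conv)

lemma inv_props:
  fixes e :: "real \<Rightarrow> real"
  assumes "bij e" "strict_mono e"
  shows inv_right: "e (inv e y) = y" and inv_left: "inv e (e v) = v"
    and inv_le: "inv e y \<le> a \<longleftrightarrow> y \<le> e a" and inv_ge: "a \<le> inv e y \<longleftrightarrow> e a \<le> y"
proof -
  show r: "e (inv e y) = y" using assms(1) by (simp add: bij_is_surj surj_f_inv_f)
  show "inv e (e v) = v" using assms(1) by (simp add: bij_is_inj)
  show "inv e y \<le> a \<longleftrightarrow> y \<le> e a"
    using strict_mono_less_eq[OF assms(2), of "inv e y" a] r by simp
  show "a \<le> inv e y \<longleftrightarrow> e a \<le> y"
    using strict_mono_less_eq[OF assms(2), of a "inv e y"] r by simp
qed

lemma inv_lt: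
  fixes e :: "real \<Rightarrow> real"
  assumes "bij e" "strict_mono e"
  shows "inv e y < a \<longleftrightarrow> y < e a" and "a < inv e y \<longleftrightarrow> e a < y"
  using inv_ge[OF assms, of a y] inv_le[OF assms, of y a] by auto

lemma dist_triple_le:
  fixes t t0 :: real and x x0 :: "'b::metric_space" and y y0 w :: real
  shows "dist (t, x, w) (t0, x0, w) \<le> dist (t, x, y) (t0, x0, y0)"
  by (simp add: dist_Pair_Pair real_sqrt_le_mono)

lemma inv_cont:
  fixes E :: "real \<Rightarrow> 'b::metric_space \<Rightarrow> real \<Rightarrow> real"
  assumes cont: "continuous_on ({0..T} \<times> UNIV \<times> UNIV) (\<lambda>(t,x,y). E t x y)"
    and mono: "\<And>t x. t \<in> {0..T} \<Longrightarrow> bij (E t x) \<and> strict_mono (E t x)"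
  shows "continuous_on ({0..T} \<times> UNIV \<times> UNIV) (\<lambda>(t,x,y). inv (E t x) y)"
  unfolding continuous_on_iff
proof (intro ballI allI impI)
  fix p0 :: "real \<times> 'b \<times> real" and e :: real
  assume p0: "p0 \<in> {0..T} \<times> UNIV \<times> UNIV" and e: "e > 0"
  obtain t0 x0 y0 where p0e: "p0 = (t0, x0, y0)" by (cases p0) auto
  have t0: "t0 \<in> {0..T}" using p0 p0e by auto
  note m0 = mono[OF t0, of x0]
  define v0 where "v0 = inv (E t0 x0) y0"
  have ev0: "E t0 x0 v0 = y0" using inv_right m0 by (simp add: v0_def)
  define lo where "lo = E t0 x0 (v0 - e/2)"
  define hi where "hi = E t0 x0 (v0 + e/2)"
  have lo: "lo < y0" using strict_monoD[OF m0[THEN conjunct2], of "v0 - e/2" v0] e ev0 by (simp add: lo_def)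
  have hi: "y0 < hi" using strict_monoD[OF m0[THEN conjunct2], of v0 "v0 + e/2"] e ev0 by (simp add: hi_def)
  define m where "m = min (y0 - lo) (hi - y0) / 2"
  have m: "m > 0" using lo hi by (simp add: m_def)
  have c1: "\<exists>d>0. \<forall>p\<in>{0..T} \<times> UNIV \<times> UNIV. dist p (t0, x0, w) < d \<longrightarrow>
              dist ((\<lambda>(t,x,y). E t x y) p) ((\<lambda>(t,x,y). E t x y) (t0, x0, w)) < m" for w
    using cont m t0 unfolding continuous_on_iff by auto
  obtain d1 where d1: "d1 > 0" "\<And>p. p \<in> {0..T} \<times> UNIV \<times> UNIV \<Longrightarrow> dist p (t0, x0, v0 - e/2) < d1 \<Longrightarrow>
      dist ((\<lambda>(t,x,y). E t x y) p) (E t0 x0 (v0 - e/2)) < m"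
    using c1[of "v0 - e/2"] by auto
  obtain d2 where d2: "d2 > 0" "\<And>p. p \<in> {0..T} \<times> UNIV \<times> UNIV \<Longrightarrow> dist p (t0, x0, v0 + e/2) < d2 \<Longrightarrow>
      dist ((\<lambda>(t,x,y). E t x y) p) (E t0 x0 (v0 + e/2)) < m"
    using c1[of "v0 + e/2"] by auto
  show "\<exists>d>0. \<forall>p\<in>{0..T} \<times> UNIV \<times> UNIV. dist p p0 < d \<longrightarrow>
          dist ((\<lambda>(t,x,y). inv (E t x) y) p) ((\<lambda>(t,x,y). inv (E t x) y) p0) < e"
  proof (intro exI[of _ "min (min d1 d2) m"] conjI ballI impI)
    show "0 < min (min d1 d2) m" using d1 d2 m by simp
    fix p assume p: "p \<in> {0..T} \<times> UNIV \<times> UNIV" and dp: "dist p p0 < min (min d1 d2) m"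
    obtain t x y where pe: "p = (t, x, y)" by (cases p) auto
    have t: "t \<in> {0..T}" using p pe by auto
    note mt = mono[OF t, of x]
    have "dist (t, x, v0 - e/2) (t0, x0, v0 - e/2) < d1"
      using dist_triple_le[of t x "v0 - e/2" t0 x0 y y0] dp pe p0e by simp
    then have "\<bar>E t x (v0 - e/2) - lo\<bar> < m" using d1(2)[of "(t, x, v0 - e/2)"] t by (simp add: lo_def dist_real_def)
    moreover have "dist (t, x, v0 + e/2) (t0, x0, v0 + e/2) < d2"
      using dist_triple_le[of t x "v0 + e/2" t0 x0 y y0] dp pe p0e by simp
    then have "\<bar>E t x (v0 + e/2) - hi\<bar> < m" using d2(2)[of "(t, x, v0 + e/2)"] t by (simp add: hi_def dist_real_def)
    moreover have "\<bar>y - y0\<bar> < m"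
    proof -
      have "dist (snd (snd p)) (snd (snd p0)) \<le> dist p p0"
        using dist_snd_le[of "snd p" "snd p0"] dist_snd_le[of p p0] by linarith
      then show ?thesis using dp pe p0e by (simp add: dist_real_def)
    qed
    ultimately have "E t x (v0 - e/2) < y" "y < E t x (v0 + e/2)"
      unfolding m_def abs_less_iff min_def by (auto split: if_splits)
    then have "v0 - e/2 < inv (E t x) y" "inv (E t x) y < v0 + e/2"
      using inv_lt[OF mt[THEN conjunct1] mt[THEN conjunct2]] by auto
    then show "dist ((\<lambda>(t,x,y). inv (E t x) y) p) ((\<lambda>(t,x,y). inv (E t x) y) p0) < e"
      using pe p0e e by (simp add: dist_real_def v0_def abs_less_iff)
  qed
qed




lemma CFB_eps:
  fixes \<eta> :: "'a \<Rightarrow> real \<Rightarrow> real^'n::finite \<Rightarrow> real \<Rightarrow> real" and u :: "'a \<Rightarrow> real \<Rightarrow> real^'n \<Rightarrow> real"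
    and B :: "real \<Rightarrow> 'a \<Rightarrow> real^'d::finite"
  assumes mono: "\<forall>\<omega>\<in>space M. \<forall>t\<in>{0..T}. \<forall>x. bij (\<eta> \<omega> t x) \<and> strict_mono (\<eta> \<omega> t x)"
    and cont: "\<forall>\<omega>\<in>space M. continuous_on ({0..T} \<times> UNIV \<times> UNIV) (\<lambda>(t,x,y). \<eta> \<omega> t x y)"
    and meas: "(\<lambda>(\<omega>,(t,x,y)). \<eta> \<omega> t x y) \<in> borel_measurable (FB M B T 0 \<Otimes>\<^sub>M borel)"
    and prog: "\<forall>t\<in>{0..T}. \<forall>x. (\<lambda>(s,(\<omega>,y)). \<eta> \<omega> s x y)
                     \<in> borel_measurable (restrict_space borel {t..T} \<Otimes>\<^sub>M (FB M B T t \<Otimes>\<^sub>M borel))"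
    and u: "CFB M B T Gb u"
  shows "CFB M B T Gb (\<lambda>\<omega> t x. eps \<eta> \<omega> t x (u \<omega> t x))"
proof -
  have uc: "\<forall>\<omega>\<in>space M. continuous_on ({0..T} \<times> Gb) (\<lambda>(t,x). u \<omega> t x)"
    and um: "(\<lambda>(\<omega>,(t,x)). u \<omega> t x) \<in> borel_measurable (FB M B T 0 \<Otimes>\<^sub>M restrict_space borel ({0..T} \<times> Gb))"
    and up: "\<forall>x\<in>Gb. \<forall>t\<in>{0..T}. (\<lambda>(s,\<omega>). u \<omega> s x) \<in> borel_measurable (restrict_space borel {t..T} \<Otimes>\<^sub>M FB M B T t)"
    using u unfolding CFB_def by auto
  have C: "continuous_on ({0..T} \<times> Gb) (\<lambda>(t,x). eps \<eta> \<omega> t x (u \<omega> t x))" if \<omega>: "\<omega> \<in> space M" for \<omega>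
  proof -
    have ic: "continuous_on ({0..T} \<times> UNIV \<times> UNIV) (\<lambda>(t,x,y). inv (\<eta> \<omega> t x) y)"
      by (rule inv_cont) (use cont mono \<omega> in auto)
    have fc: "continuous_on ({0..T} \<times> Gb) (\<lambda>p. (fst p, snd p, u \<omega> (fst p) (snd p)))"
    proof (intro continuous_on_Pair continuous_on_fst continuous_on_snd continuous_on_id)
      show "continuous_on ({0..T} \<times> Gb) (\<lambda>p. u \<omega> (fst p) (snd p))"
        using uc \<omega> by (simp add: case_prod_beta')
    qed
    have "continuous_on ({0..T} \<times> Gb) (\<lambda>p. (\<lambda>(t,x,y). inv (\<eta> \<omega> t x) y) (fst p, snd p, u \<omega> (fst p) (snd p)))"
      by (rule continuous_on_compose2[OF ic fc]) auto
    then show ?thesis by (simp add: eps_def case_prod_beta')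
  qed
  have Mm: "(\<lambda>(\<omega>,(t,x)). eps \<eta> \<omega> t x (u \<omega> t x)) \<in> borel_measurable (FB M B T 0 \<Otimes>\<^sub>M restrict_space borel ({0..T} \<times> Gb))"
  proof (rule borel_measurableI_le)
    fix a :: real
    let ?N = "FB M B T 0 \<Otimes>\<^sub>M restrict_space borel ({0..T} \<times> Gb)"
    have k: "(\<lambda>q::real \<times> (real^'n). (fst q, snd q, a)) \<in> restrict_space borel ({0..T} \<times> Gb) \<rightarrow>\<^sub>M borel"
      by (intro measurable_restrict_space1 borel_measurable_continuous_onI continuous_intros)
    have g: "(\<lambda>p. (fst p, (fst (snd p), snd (snd p), a))) \<in> ?N \<rightarrow>\<^sub>M (FB M B T 0 \<Otimes>\<^sub>M borel)"
      by (intro measurable_Pair measurable_fst measurable_compose[OF measurable_snd k])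
    have Ea: "(\<lambda>p. \<eta> (fst p) (fst (snd p)) (snd (snd p)) a) \<in> borel_measurable ?N"
      using measurable_compose[OF g meas] by (simp add: case_prod_beta')
    have um': "(\<lambda>p. u (fst p) (fst (snd p)) (snd (snd p))) \<in> borel_measurable ?N"
      using um by (simp add: case_prod_beta')
    have "{w \<in> space ?N. (\<lambda>(\<omega>,(t,x)). eps \<eta> \<omega> t x (u \<omega> t x)) w \<le> a}
        = {w \<in> space ?N. u (fst w) (fst (snd w)) (snd (snd w)) \<le> \<eta> (fst w) (fst (snd w)) (snd (snd w)) a}"
    proof (intro Collect_cong conj_cong refl)
      fix w assume w: "w \<in> space ?N"
      then have "fst w \<in> space M" "fst (snd w) \<in> {0..T}" by (auto simp: space_pair_measure space_restrict_space)
      then have mm: "bij (\<eta> (fst w) (fst (snd w)) (snd (snd w))) \<and> strict_mono (\<eta> (fst w) (fst (snd w)) (snd (snd w)))"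
        using mono by auto
      show "(\<lambda>(\<omega>,(t,x)). eps \<eta> \<omega> t x (u \<omega> t x)) w \<le> a \<longleftrightarrow> u (fst w) (fst (snd w)) (snd (snd w)) \<le> \<eta> (fst w) (fst (snd w)) (snd (snd w)) a"
        using inv_le[OF mm[THEN conjunct1] mm[THEN conjunct2]] by (simp add: eps_def case_prod_beta')
    qed
    also have "\<dots> \<in> sets ?N" by (rule borel_measurable_le[OF um' Ea])
    finally show "{w \<in> space ?N. (\<lambda>(\<omega>,(t,x)). eps \<eta> \<omega> t x (u \<omega> t x)) w \<le> a} \<in> sets ?N" .
  qed
  have P: "(\<lambda>(s,\<omega>). eps \<eta> \<omega> s x (u \<omega> s x)) \<in> borel_measurable (restrict_space borel {t..T} \<Otimes>\<^sub>M FB M B T t)"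
    if x: "x \<in> Gb" and t: "t \<in> {0..T}" for x t
  proof (rule borel_measurableI_le)
    fix a :: real
    let ?N = "restrict_space borel {t..T} \<Otimes>\<^sub>M FB M B T t"
    have g: "(\<lambda>p. (fst p, (snd p, a))) \<in> ?N \<rightarrow>\<^sub>M (restrict_space borel {t..T} \<Otimes>\<^sub>M (FB M B T t \<Otimes>\<^sub>M borel))"
      by (intro measurable_Pair measurable_fst measurable_snd measurable_const) simp
    have Ea: "(\<lambda>p. \<eta> (snd p) (fst p) x a) \<in> borel_measurable ?N"
      using measurable_compose[OF g prog[rule_format, OF t, of x]] by (simp add: case_prod_beta')
    have um': "(\<lambda>p. u (snd p) (fst p) x) \<in> borel_measurable ?N"
      using up x t by (simp add: case_prod_beta')
    have "{w \<in> space ?N. (\<lambda>(s,\<omega>). eps \<eta> \<omega> s x (u \<omega> s x)) w \<le> a}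
        = {w \<in> space ?N. u (snd w) (fst w) x \<le> \<eta> (snd w) (fst w) x a}"
    proof (intro Collect_cong conj_cong refl)
      fix w assume w: "w \<in> space ?N"
      then have "snd w \<in> space M" "fst w \<in> {0..T}" using t by (auto simp: space_pair_measure space_restrict_space)
      then have mm: "bij (\<eta> (snd w) (fst w) x) \<and> strict_mono (\<eta> (snd w) (fst w) x)"
        using mono by auto
      show "(\<lambda>(s,\<omega>). eps \<eta> \<omega> s x (u \<omega> s x)) w \<le> a \<longleftrightarrow> u (snd w) (fst w) x \<le> \<eta> (snd w) (fst w) x a"
        using inv_le[OF mm[THEN conjunct1] mm[THEN conjunct2]] by (simp add: eps_def case_prod_beta')
    qed
    also have "\<dots> \<in> sets ?N" by (rule borel_measurable_le[OF um' Ea])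
    finally show "{w \<in> space ?N. (\<lambda>(s,\<omega>). eps \<eta> \<omega> s x (u \<omega> s x)) w \<le> a} \<in> sets ?N" .
  qed
  show ?thesis unfolding CFB_def using C Mm P by blast
qed




lemma touch_equiv:
  fixes E :: "real \<Rightarrow> real^'n::finite \<Rightarrow> real \<Rightarrow> real"
  assumes mono: "\<And>t x. t \<in> {0..T} \<Longrightarrow> bij (E t x) \<and> strict_mono (E t x)" and tz: "tz \<in> {0..T}"
  shows "touch_above T Gb U (\<lambda>t x. E t x (\<phi> t x)) tz xz \<longleftrightarrow> touch_above T Gb (\<lambda>t x. inv (E t x) (U t x)) \<phi> tz xz"
    and "touch_below T Gb U (\<lambda>t x. E t x (\<phi> t x)) tz xz \<longleftrightarrow> touch_below T Gb (\<lambda>t x. inv (E t x) (U t x)) \<phi> tz xz"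
proof -
  have le: "(U t x - E t x (\<phi> t x) \<le> 0) = (inv (E t x) (U t x) - \<phi> t x \<le> 0)" if "t \<in> {0..T}" for t x
    using inv_le[OF mono[OF that, of x, THEN conjunct1] mono[OF that, of x, THEN conjunct2], of "U t x" "\<phi> t x"] by simp
  have ge: "(U t x - E t x (\<phi> t x) \<ge> 0) = (inv (E t x) (U t x) - \<phi> t x \<ge> 0)" if "t \<in> {0..T}" for t x
    using inv_ge[OF mono[OF that, of x, THEN conjunct1] mono[OF that, of x, THEN conjunct2], of "\<phi> t x" "U t x"] by simp
  have eq: "(U t x - E t x (\<phi> t x) = 0) = (inv (E t x) (U t x) - \<phi> t x = 0)" if "t \<in> {0..T}" for t x
    using le[OF that, of x] ge[OF that, of x] by linarith
  show "touch_above T Gb U (\<lambda>t x. E t x (\<phi> t x)) tz xz \<longleftrightarrow> touch_above T Gb (\<lambda>t x. inv (E t x) (U t x)) \<phi> tz xz"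
    unfolding touch_above_def using le eq[OF tz] by (simp cong: conj_cong)
  show "touch_below T Gb U (\<lambda>t x. E t x (\<phi> t x)) tz xz \<longleftrightarrow> touch_below T Gb (\<lambda>t x. inv (E t x) (U t x)) \<phi> tz xz"
    unfolding touch_below_def using ge eq[OF tz] by (simp cong: conj_cong)
qed

lemma pos_scale_le0: "(D::real) > 0 \<Longrightarrow> (D * q \<le> 0) = (q \<le> 0)"
  by (simp add: mult_le_0_iff)
lemma pos_scale_ge0: "(D::real) > 0 \<Longrightarrow> (D * q \<ge> 0) = (q \<ge> 0)"
  by (simp add: zero_le_mult_iff)
lemma pos_scale_min: "(D::real) > 0 \<Longrightarrow> (min (D * a) (D * c) \<le> 0) = (min a c \<le> 0)"
  by (auto simp: min_def mult_le_0_iff)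
lemma pos_scale_max: "(D::real) > 0 \<Longrightarrow> (max (D * a) (D * c) \<ge> 0) = (max a c \<ge> 0)"
  by (auto simp: max_def zero_le_mult_iff)

theorem proposition3p1:
  fixes M :: "'a measure"
    and B :: "real \<Rightarrow> 'a \<Rightarrow> real^'d::finite"
    and T K c \<beta>1 :: real
    and G :: "(real^'n::finite) set"
    and \<phi>G :: "real^'n \<Rightarrow> real"
    and \<sigma> :: "real^'n \<Rightarrow> real^'d^'n"
    and b :: "real^'n \<Rightarrow> real^'n"
    and l :: "real^'n \<Rightarrow> real"
    and f :: "'a \<Rightarrow> real \<Rightarrow> real^'n \<Rightarrow> real \<Rightarrow> real^'d \<Rightarrow> real"
    and h :: "'a \<Rightarrow> real \<Rightarrow> real^'n \<Rightarrow> real \<Rightarrow> real"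
    and g :: "real \<Rightarrow> real^'n \<Rightarrow> real \<Rightarrow> real^'d"
    and \<eta> :: "'a \<Rightarrow> real \<Rightarrow> real^'n \<Rightarrow> real \<Rightarrow> real"
    and u :: "'a \<Rightarrow> real \<Rightarrow> real^'n \<Rightarrow> real"
  assumes BM: "brownian_motion M B"
    and T_pos: "0 < T"
    (* the domain G *)
    and G_open: "open G" and G_conn: "connected G" and G_bdd: "bounded G" and G_ne: "G \<noteq> {}"
    and phiG_C2b: "C2b \<phi>G"
    and G_phi: "G = {x. \<phi>G x > 0}" and bd_phi: "frontier G = {x. \<phi>G x = 0}"
    and normal_unit: "\<forall>x\<in>frontier G. norm (grad \<phi>G x) = 1"
    (* f *)
    and f_cont: "\<forall>\<omega>\<in>space M. continuous_on ({0..T} \<times> closure G \<times> UNIV \<times> UNIV) (\<lambda>(t,x,y,z). f \<omega> t x y z)"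
    and f_lip_x: "\<exists>Lf. \<forall>\<omega>\<in>space M. \<forall>t\<in>{0..T}. \<forall>x\<in>closure G. \<forall>x'\<in>closure G. \<forall>y z.
                    \<bar>f \<omega> t x y z - f \<omega> t x' y z\<bar> \<le> Lf * dist x x'"
    and f_growth: "\<forall>\<omega>\<in>space M. \<forall>t\<in>{0..T}. \<forall>x\<in>closure G. \<forall>y z.
                    \<bar>f \<omega> t x y z\<bar> \<le> K * (1 + \<bar>y\<bar> + norm x + norm z)"
    and f_lip_yz: "\<forall>\<omega>\<in>space M. \<forall>t\<in>{0..T}. \<forall>x\<in>closure G. \<forall>y1 y2 z1 z2.
                    (f \<omega> t x y1 z1 - f \<omega> t x y2 z2)\<^sup>2 \<le> c * ((y1 - y2)\<^sup>2 + (norm (z1 - z2))\<^sup>2)"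
    (* h *)
    and h_cont: "\<forall>\<omega>\<in>space M. continuous_on ({0..T} \<times> closure G \<times> UNIV) (\<lambda>(t,x,y). h \<omega> t x y)"
    and h_lip_x: "\<exists>Lh. \<forall>\<omega>\<in>space M. \<forall>t\<in>{0..T}. \<forall>x\<in>closure G. \<forall>x'\<in>closure G. \<forall>y.
                    \<bar>h \<omega> t x y - h \<omega> t x' y\<bar> \<le> Lh * dist x x'"
    and h_growth: "\<forall>\<omega>\<in>space M. \<forall>t\<in>{0..T}. \<forall>x\<in>closure G. \<forall>y.
                    \<bar>h \<omega> t x y\<bar> \<le> K * (1 + \<bar>y\<bar> + norm x)"
    and h_lip_y: "\<forall>\<omega>\<in>space M. \<forall>t\<in>{0..T}. \<forall>x\<in>closure G. \<forall>y1 y2.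
                    \<bar>h \<omega> t x y1 - h \<omega> t x y2\<bar> \<le> \<beta>1 * \<bar>y1 - y2\<bar>"
    (* sigma, b, l, g *)
    and sigma_lip: "\<exists>C. C-lipschitz_on UNIV \<sigma>"
    and b_lip: "\<exists>C. C-lipschitz_on UNIV b"
    and l_cont: "continuous_on (closure G) l"
    and l_growth: "\<forall>x\<in>closure G. \<bar>l x\<bar> \<le> K * (1 + norm x)"
    and g_reg: "Cb023 T g"
    (* the stochastic flow eta associated with g: properties used in place of its SDE *)
    and eta_diffeo: "\<forall>\<omega>\<in>space M. \<forall>t\<in>{0..T}. \<forall>x. bij (\<eta> \<omega> t x) \<and> strict_mono (\<eta> \<omega> t x)"
    and eta_Dy_pos: "\<forall>\<omega>\<in>space M. \<forall>t\<in>{0..T}. \<forall>x y.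
                       ((\<lambda>y'. \<eta> \<omega> t x y') has_real_derivative Dy (\<eta> \<omega>) t x y) (at y) \<and> Dy (\<eta> \<omega>) t x y > 0"
    and eta_terminal: "\<forall>\<omega>\<in>space M. \<forall>x y. \<eta> \<omega> T x y = y"
    and eta_cont: "\<forall>\<omega>\<in>space M. continuous_on ({0..T} \<times> UNIV \<times> UNIV) (\<lambda>(t,x,y). \<eta> \<omega> t x y)"
    and eta_C2: "\<forall>\<omega>\<in>space M. \<forall>t\<in>{0..T}. C2 (\<lambda>(x,y). \<eta> \<omega> t x y)"
    and eta_meas: "(\<lambda>(\<omega>,(t,x,y)). \<eta> \<omega> t x y) \<in> borel_measurable (FB M B T 0 \<Otimes>\<^sub>M borel)"
    and eta_prog: "\<forall>t\<in>{0..T}. \<forall>x. (\<lambda>(s,(\<omega>,y)). \<eta> \<omega> s x y)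
                     \<in> borel_measurable (restrict_space borel {t..T} \<Otimes>\<^sub>M (FB M B T t \<Otimes>\<^sub>M borel))"
    (* u *)
    and u_C: "CFB M B T (closure G) u"
  shows "visc_sol M B T G \<phi>G \<sigma> b l f g \<eta> h u \<longleftrightarrow>
         visc_sol M B T G \<phi>G \<sigma> b l (ftilde \<sigma> b f g \<eta>) (\<lambda>t x y. 0) (\<lambda>\<omega> t x y. y) (htilde \<phi>G h \<eta>)
                  (\<lambda>\<omega> t x. eps \<eta> \<omega> t x (u \<omega> t x))"
proof -
  have mono: "\<And>\<omega> t x. \<omega> \<in> space M \<Longrightarrow> t \<in> {0..T} \<Longrightarrow> bij (\<eta> \<omega> t x) \<and> strict_mono (\<eta> \<omega> t x)"
    using eta_diffeo by blast
  have CFBv: "CFB M B T (closure G) (\<lambda>\<omega> t x. eps \<eta> \<omega> t x (u \<omega> t x))"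
    by (rule CFB_eps[OF eta_diffeo eta_cont eta_meas eta_prog u_C])
  have termeq: "eps \<eta> \<omega> T x (u \<omega> T x) = u \<omega> T x" if "\<omega> \<in> space M" for \<omega> x
  proof -
    have "\<eta> \<omega> T x = id" by (rule ext) (simp add: eta_terminal that)
    then show ?thesis by (simp add: eps_def inv_id)
  qed
  have touch: "(touch_above T (closure G) (u \<omega>) (\<lambda>t x. \<eta> \<omega> t x (\<phi> \<omega> t x)) (\<tau> \<omega>) (\<xi> \<omega>) \<longleftrightarrow>
                touch_above T (closure G) (\<lambda>t x. eps \<eta> \<omega> t x (u \<omega> t x)) (\<lambda>t x. \<phi> \<omega> t x) (\<tau> \<omega>) (\<xi> \<omega>)) \<and>
               (touch_below T (closure G) (u \<omega>) (\<lambda>t x. \<eta> \<omega> t x (\<phi> \<omega> t x)) (\<tau> \<omega>) (\<xi> \<omega>) \<longleftrightarrow>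
                touch_below T (closure G) (\<lambda>t x. eps \<eta> \<omega> t x (u \<omega> t x)) (\<lambda>t x. \<phi> \<omega> t x) (\<tau> \<omega>) (\<xi> \<omega>))"
    if \<tau>: "bstop M B T \<tau>" and \<omega>: "\<omega> \<in> space M" for \<tau> \<xi> \<phi> \<omega>
  proof -
    have t0: "\<tau> \<omega> \<in> {0..T}" using \<tau> \<omega> unfolding bstop_def by auto
    show ?thesis unfolding eps_def
      using touch_equiv[where E="\<eta> \<omega>" and T=T and tz="\<tau> \<omega>" and \<phi>="\<phi> \<omega>" and U="u \<omega>" and xz="\<xi> \<omega>" and Gb="closure G"]
        mono[OF \<omega>] t0 by auto
  qed
  have ident: "Aop \<sigma> b (f \<omega>) g (\<lambda>t x. \<eta> \<omega> t x (\<phi> \<omega> t x)) (\<tau> \<omega>) (\<xi> \<omega>) - Dy (\<eta> \<omega>) (\<tau> \<omega>) (\<xi> \<omega>) (\<phi> \<omega> (\<tau> \<omega>) (\<xi> \<omega>)) * Dt (\<phi> \<omega>) (\<tau> \<omega>) (\<xi> \<omega>)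
       = Dy (\<eta> \<omega>) (\<tau> \<omega>) (\<xi> \<omega>) (\<phi> \<omega> (\<tau> \<omega>) (\<xi> \<omega>)) * (Aop \<sigma> b (ftilde \<sigma> b f g \<eta> \<omega>) (\<lambda>t x y. 0) (\<lambda>t x. \<phi> \<omega> t x) (\<tau> \<omega>) (\<xi> \<omega>)
                                   - Dy (\<lambda>t x y. y) (\<tau> \<omega>) (\<xi> \<omega>) (\<phi> \<omega> (\<tau> \<omega>) (\<xi> \<omega>)) * Dt (\<phi> \<omega>) (\<tau> \<omega>) (\<xi> \<omega>))"
    and bident: "- dnormal \<phi>G (\<lambda>x. \<eta> \<omega> (\<tau> \<omega>) x (\<phi> \<omega> (\<tau> \<omega>) x)) (\<xi> \<omega>) - h \<omega> (\<tau> \<omega>) (\<xi> \<omega>) (\<eta> \<omega> (\<tau> \<omega>) (\<xi> \<omega>) (\<phi> \<omega> (\<tau> \<omega>) (\<xi> \<omega>)))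
       = Dy (\<eta> \<omega>) (\<tau> \<omega>) (\<xi> \<omega>) (\<phi> \<omega> (\<tau> \<omega>) (\<xi> \<omega>)) * (- dnormal \<phi>G (\<lambda>x. \<phi> \<omega> (\<tau> \<omega>) x) (\<xi> \<omega>) - htilde \<phi>G h \<eta> \<omega> (\<tau> \<omega>) (\<xi> \<omega>) (\<phi> \<omega> (\<tau> \<omega>) (\<xi> \<omega>)))"
    and Dpos: "Dy (\<eta> \<omega>) (\<tau> \<omega>) (\<xi> \<omega>) (\<phi> \<omega> (\<tau> \<omega>) (\<xi> \<omega>)) > 0"
    if \<phi>: "C12F M B T \<tau> \<phi>" and \<omega>: "\<omega> \<in> space M" and t: "0 < \<tau> \<omega>" "\<tau> \<omega> < T" for \<tau> \<xi> \<phi> \<omega>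
  proof -
    have tT: "\<tau> \<omega> \<in> {0..T}" using t by auto
    have E: "C2 (\<lambda>(x,y). \<eta> \<omega> (\<tau> \<omega>) x y)" using eta_C2 \<omega> tT by blast
    have P: "C2 (\<phi> \<omega> (\<tau> \<omega>))" using \<phi> \<omega> unfolding C12F_def C12_def by blast
    show D: "Dy (\<eta> \<omega>) (\<tau> \<omega>) (\<xi> \<omega>) (\<phi> \<omega> (\<tau> \<omega>) (\<xi> \<omega>)) > 0" using eta_Dy_pos \<omega> tT by blast
    show "Aop \<sigma> b (f \<omega>) g (\<lambda>t x. \<eta> \<omega> t x (\<phi> \<omega> t x)) (\<tau> \<omega>) (\<xi> \<omega>) - Dy (\<eta> \<omega>) (\<tau> \<omega>) (\<xi> \<omega>) (\<phi> \<omega> (\<tau> \<omega>) (\<xi> \<omega>)) * Dt (\<phi> \<omega>) (\<tau> \<omega>) (\<xi> \<omega>)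
       = Dy (\<eta> \<omega>) (\<tau> \<omega>) (\<xi> \<omega>) (\<phi> \<omega> (\<tau> \<omega>) (\<xi> \<omega>)) * (Aop \<sigma> b (ftilde \<sigma> b f g \<eta> \<omega>) (\<lambda>t x y. 0) (\<lambda>t x. \<phi> \<omega> t x) (\<tau> \<omega>) (\<xi> \<omega>)
                                   - Dy (\<lambda>t x y. y) (\<tau> \<omega>) (\<xi> \<omega>) (\<phi> \<omega> (\<tau> \<omega>) (\<xi> \<omega>)) * Dt (\<phi> \<omega>) (\<tau> \<omega>) (\<xi> \<omega>))"
      using Aop_identity[where \<eta>=\<eta> and \<omega>=\<omega> and t="\<tau> \<omega>" and \<phi>="\<phi> \<omega>" and x="\<xi> \<omega>" and f=f and \<sigma>=\<sigma> and b=b and g=g, OF E P D]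
      by simp
    show "- dnormal \<phi>G (\<lambda>x. \<eta> \<omega> (\<tau> \<omega>) x (\<phi> \<omega> (\<tau> \<omega>) x)) (\<xi> \<omega>) - h \<omega> (\<tau> \<omega>) (\<xi> \<omega>) (\<eta> \<omega> (\<tau> \<omega>) (\<xi> \<omega>) (\<phi> \<omega> (\<tau> \<omega>) (\<xi> \<omega>)))
       = Dy (\<eta> \<omega>) (\<tau> \<omega>) (\<xi> \<omega>) (\<phi> \<omega> (\<tau> \<omega>) (\<xi> \<omega>)) * (- dnormal \<phi>G (\<lambda>x. \<phi> \<omega> (\<tau> \<omega>) x) (\<xi> \<omega>) - htilde \<phi>G h \<eta> \<omega> (\<tau> \<omega>) (\<xi> \<omega>) (\<phi> \<omega> (\<tau> \<omega>) (\<xi> \<omega>)))"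
      using bd_identity[where \<eta>=\<eta> and \<omega>=\<omega> and t="\<tau> \<omega>" and \<phi>="\<phi> \<omega>" and x="\<xi> \<omega>" and h=h and \<phi>G=\<phi>G, OF E P D]
      by simp
  qed
  have Q1: "(0 < \<tau> \<omega> \<and> \<tau> \<omega> < T \<and> \<xi> \<omega> \<in> G \<longrightarrow> Aop \<sigma> b (f \<omega>) g (\<lambda>t x. \<eta> \<omega> t x (\<phi> \<omega> t x)) (\<tau> \<omega>) (\<xi> \<omega>) - Dy (\<eta> \<omega>) (\<tau> \<omega>) (\<xi> \<omega>) (\<phi> \<omega> (\<tau> \<omega>) (\<xi> \<omega>)) * Dt (\<phi> \<omega>) (\<tau> \<omega>) (\<xi> \<omega>) \<le> 0) = (0 < \<tau> \<omega> \<and> \<tau> \<omega> < T \<and> \<xi> \<omega> \<in> G \<longrightarrow> Aop \<sigma> b (ftilde \<sigma> b f g \<eta> \<omega>) (\<lambda>t x y. 0) (\<phi> \<omega>) (\<tau> \<omega>) (\<xi> \<omega>) - Dy (\<lambda>t x y. y) (\<tau> \<omega>) (\<xi> \<omega>) (\<phi> \<omega> (\<tau> \<omega>) (\<xi> \<omega>)) * Dt (\<phi> \<omega>) (\<tau> \<omega>) (\<xi> \<omega>) \<le> 0)"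
    if \<phi>: "C12F M B T \<tau> \<phi>" and \<omega>: "\<omega> \<in> space M" for \<tau> \<xi> \<phi> \<omega>
  proof (cases "0 < \<tau> \<omega> \<and> \<tau> \<omega> < T")
    case True
    note i1 = ident[OF \<phi> \<omega> True[THEN conjunct1] True[THEN conjunct2], of \<xi>]
    note i2 = bident[OF \<phi> \<omega> True[THEN conjunct1] True[THEN conjunct2], of \<xi>]
    note i3 = Dpos[OF \<phi> \<omega> True[THEN conjunct1] True[THEN conjunct2], of \<xi>]
    show ?thesis unfolding i1 i2 using pos_scale_le0[OF i3] True by simp
  next
    case False
    then show ?thesis by blast
  qed
  have Q2: "(0 < \<tau> \<omega> \<and> \<tau> \<omega> < T \<and> \<xi> \<omega> \<in> G \<longrightarrow> Aop \<sigma> b (f \<omega>) g (\<lambda>t x. \<eta> \<omega> t x (\<phi> \<omega> t x)) (\<tau> \<omega>) (\<xi> \<omega>) - Dy (\<eta> \<omega>) (\<tau> \<omega>) (\<xi> \<omega>) (\<phi> \<omega> (\<tau> \<omega>) (\<xi> \<omega>)) * Dt (\<phi> \<omega>) (\<tau> \<omega>) (\<xi> \<omega>) \<ge> 0) = (0 < \<tau> \<omega> \<and> \<tau> \<omega> < T \<and> \<xi> \<omega> \<in> G \<longrightarrow> Aop \<sigma> b (ftilde \<sigma> b f g \<eta> \<omega>) (\<lambda>t x y. 0) (\<phi> \<omega>) (\<tau> \<omega>) (\<xi> \<omega>) - Dy (\<lambda>t x y. y) (\<tau> \<omega>) (\<xi> \<omega>) (\<phi> \<omega> (\<tau> \<omega>)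 (\<xi> \<omega>)) * Dt (\<phi> \<omega>) (\<tau> \<omega>) (\<xi> \<omega>) \<ge> 0)"
    if \<phi>: "C12F M B T \<tau> \<phi>" and \<omega>: "\<omega> \<in> space M" for \<tau> \<xi> \<phi> \<omega>
  proof (cases "0 < \<tau> \<omega> \<and> \<tau> \<omega> < T")
    case True
    note i1 = ident[OF \<phi> \<omega> True[THEN conjunct1] True[THEN conjunct2], of \<xi>]
    note i2 = bident[OF \<phi> \<omega> True[THEN conjunct1] True[THEN conjunct2], of \<xi>]
    note i3 = Dpos[OF \<phi> \<omega> True[THEN conjunct1] True[THEN conjunct2], of \<xi>]
    show ?thesis unfolding i1 i2 using pos_scale_ge0[OF i3] True by simp
  next
    case False
    then show ?thesis by blast
  qed
  have Q3: "(0 < \<tau> \<omega> \<and> \<tau> \<omega> < T \<and> \<xi> \<omega> \<in> frontier G \<longrightarrow> min (Aop \<sigma> b (f \<omega>) g (\<lambda>t x. \<eta> \<omega> t x (\<phi> \<omega> t x)) (\<tau> \<omega>) (\<xi> \<omega>) - Dy (\<eta> \<omega>) (\<tau> \<omega>) (\<xi> \<omega>) (\<phi> \<omega> (\<tau> \<omega>) (\<xi> \<omega>)) * Dt (\<phi> \<omega>) (\<tau> \<omega>) (\<xi> \<omega>)) (- dnormal \<phi>G (\<lambda>x. \<eta> \<omega> (\<tau> \<omega>) x (\<phi> \<omega> (\<tau> \<omega>) x)) (\<xi> \<omega>) - h \<omega> (\<tau> \<omega>) (\<xi> \<omega>) (\<eta> \<omega> (\<tau> \<omega>) (\<xi> \<omega>)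 (\<phi> \<omega> (\<tau> \<omega>) (\<xi> \<omega>)))) \<le> 0) = (0 < \<tau> \<omega> \<and> \<tau> \<omega> < T \<and> \<xi> \<omega> \<in> frontier G \<longrightarrow> min (Aop \<sigma> b (ftilde \<sigma> b f g \<eta> \<omega>) (\<lambda>t x y. 0) (\<phi> \<omega>) (\<tau> \<omega>) (\<xi> \<omega>) - Dy (\<lambda>t x y. y) (\<tau> \<omega>) (\<xi> \<omega>) (\<phi> \<omega> (\<tau> \<omega>) (\<xi> \<omega>)) * Dt (\<phi> \<omega>) (\<tau> \<omega>) (\<xi> \<omega>)) (- dnormal \<phi>G (\<phi> \<omega> (\<tau> \<omega>)) (\<xi> \<omega>) - htilde \<phi>G h \<eta> \<omega> (\<tau> \<omega>) (\<xi> \<omega>) (\<phi> \<omega> (\<tau> \<omega>) (\<xi> \<omega>))) \<le> 0)"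
    if \<phi>: "C12F M B T \<tau> \<phi>" and \<omega>: "\<omega> \<in> space M" for \<tau> \<xi> \<phi> \<omega>
  proof (cases "0 < \<tau> \<omega> \<and> \<tau> \<omega> < T")
    case True
    note i1 = ident[OF \<phi> \<omega> True[THEN conjunct1] True[THEN conjunct2], of \<xi>]
    note i2 = bident[OF \<phi> \<omega> True[THEN conjunct1] True[THEN conjunct2], of \<xi>]
    note i3 = Dpos[OF \<phi> \<omega> True[THEN conjunct1] True[THEN conjunct2], of \<xi>]
    show ?thesis unfolding i1 i2 using pos_scale_min[OF i3] True by simp
  next
    case False
    then show ?thesis by blast
  qed
  have Q4: "(0 < \<tau> \<omega> \<and> \<tau> \<omega> < T \<and> \<xi> \<omega> \<in> frontier G \<longrightarrow> max (Aop \<sigma> b (f \<omega>) g (\<lambda>t x. \<eta> \<omega> t x (\<phi> \<omega> t x)) (\<tau> \<omega>) (\<xi> \<omega>) - Dy (\<eta> \<omega>) (\<tau> \<omega>) (\<xi> \<omega>) (\<phi> \<omega> (\<tau> \<omega>) (\<xi> \<omega>)) * Dt (\<phi> \<omega>) (\<tau> \<omega>) (\<xi> \<omega>)) (- dnormal \<phi>G (\<lambda>x. \<eta> \<omega> (\<tau> \<omega>) x (\<phi> \<omega> (\<tau> \<omega>) x)) (\<xi> \<omega>) - h \<omega> (\<tau> \<omega>) (\<xi> \<omega>) (\<eta> \<omega> (\<tau> \<omega>) (\<xi> \<omega>) (\<phi> \<omega> (\<tau> \<omega>) (\<xi> \<omega>)))) \<ge> 0) = (0 < \<tau> \<omega>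 \<and> \<tau> \<omega> < T \<and> \<xi> \<omega> \<in> frontier G \<longrightarrow> max (Aop \<sigma> b (ftilde \<sigma> b f g \<eta> \<omega>) (\<lambda>t x y. 0) (\<phi> \<omega>) (\<tau> \<omega>) (\<xi> \<omega>) - Dy (\<lambda>t x y. y) (\<tau> \<omega>) (\<xi> \<omega>) (\<phi> \<omega> (\<tau> \<omega>) (\<xi> \<omega>)) * Dt (\<phi> \<omega>) (\<tau> \<omega>) (\<xi> \<omega>)) (- dnormal \<phi>G (\<phi> \<omega> (\<tau> \<omega>)) (\<xi> \<omega>) - htilde \<phi>G h \<eta> \<omega> (\<tau> \<omega>) (\<xi> \<omega>) (\<phi> \<omega> (\<tau> \<omega>) (\<xi> \<omega>))) \<ge> 0)"
    if \<phi>: "C12F M B T \<tau> \<phi>" and \<omega>: "\<omega> \<in> space M" for \<tau> \<xi> \<phi> \<omega>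
  proof (cases "0 < \<tau> \<omega> \<and> \<tau> \<omega> < T")
    case True
    note i1 = ident[OF \<phi> \<omega> True[THEN conjunct1] True[THEN conjunct2], of \<xi>]
    note i2 = bident[OF \<phi> \<omega> True[THEN conjunct1] True[THEN conjunct2], of \<xi>]
    note i3 = Dpos[OF \<phi> \<omega> True[THEN conjunct1] True[THEN conjunct2], of \<xi>]
    show ?thesis unfolding i1 i2 using pos_scale_max[OF i3] True by simp
  next
    case False
    then show ?thesis by blast
  qed
  have sub: "visc_sub M B T G \<phi>G \<sigma> b l f g \<eta> h u \<longleftrightarrow>
         visc_sub M B T G \<phi>G \<sigma> b l (ftilde \<sigma> b f g \<eta>) (\<lambda>t x y. 0) (\<lambda>\<omega> t x y. y) (htilde \<phi>G h \<eta>)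
                  (\<lambda>\<omega> t x. eps \<eta> \<omega> t x (u \<omega> t x))"
    unfolding visc_sub_def
    apply (intro conj_cong iff_allI imp_cong refl)
        apply (simp add: u_C CFBv)
       apply (simp add: termeq)
    subgoal for \<tau> \<xi> \<phi>
      apply (elim conjE)?
      apply (rule AE_cong)
      subgoal premises p for \<omega> using touch[where \<tau>=\<tau> and \<xi>=\<xi> and \<phi>=\<phi> and \<omega>=\<omega>] p by simp
      done
    subgoal for \<tau> \<xi> \<phi>
      apply (elim conjE)?
      apply (rule AE_cong)
      subgoal premises p for \<omega> using Q1[where \<tau>=\<tau> and \<xi>=\<xi> and \<phi>=\<phi> and \<omega>=\<omega>] p by simp
      done
    subgoal for \<tau> \<xi> \<phi>
      apply (elim conjE)?
      apply (rule AE_cong)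
      subgoal premises p for \<omega> using Q3[where \<tau>=\<tau> and \<xi>=\<xi> and \<phi>=\<phi> and \<omega>=\<omega>] p by simp
      done
    done
  have super: "visc_super M B T G \<phi>G \<sigma> b l f g \<eta> h u \<longleftrightarrow>
         visc_super M B T G \<phi>G \<sigma> b l (ftilde \<sigma> b f g \<eta>) (\<lambda>t x y. 0) (\<lambda>\<omega> t x y. y) (htilde \<phi>G h \<eta>)
                  (\<lambda>\<omega> t x. eps \<eta> \<omega> t x (u \<omega> t x))"
    unfolding visc_super_def
    apply (intro conj_cong iff_allI imp_cong refl)
        apply (simp add: u_C CFBv)
       apply (simp add: termeq)
    subgoal for \<tau> \<xi> \<phi>
      apply (elim conjE)?
      apply (rule AE_cong)
      subgoal premises p for \<omega> using touch[where \<tau>=\<tau> and \<xi>=\<xi> and \<phi>=\<phi> and \<omega>=\<omega>] p by simp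
      done
    subgoal for \<tau> \<xi> \<phi>
      apply (elim conjE)?
      apply (rule AE_cong)
      subgoal premises p for \<omega> using Q2[where \<tau>=\<tau> and \<xi>=\<xi> and \<phi>=\<phi> and \<omega>=\<omega>] p by simp
      done
    subgoal for \<tau> \<xi> \<phi>
      apply (elim conjE)?
      apply (rule AE_cong)
      subgoal premises p for \<omega> using Q4[where \<tau>=\<tau> and \<xi>=\<xi> and \<phi>=\<phi> and \<omega>=\<omega>] p by simp
      done
    done
  show ?thesis unfolding visc_sol_def using sub super by simp
qed


end
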